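(* Let $(\Omega,\mathbb{P},\sigma)$ be a symbolic dynamical system and $k\geq2$ an integer with $\underline{H}_k(\mathbb{P})>0$. Then for $\mathbb{P}^k$-almost every $(x^1,\dots,x^k)\in\Omega^k$, \[\limsup_{n\to+\infty}\frac{M_n(x^1,\dots,x^k)}{\log n}\leq\frac{k}{(k-1)\underline{H}_k(\mathbb{P})}.\] Moreover, if the system is $\alpha$-mixing with an exponential decay, or if it is $\psi$-mixing with $\psi(g)=g^{-a}$ for some $a>0$, then for $\mathbb{P}^k$-almost every $(x^1,\dots,x^k)\in\Omega^k$, \[\liminf_{n\to+\infty}\frac{M_n(x^1,\dots,x^k)}{\log n}\geq\frac{k}{(k-1)\overline{H}_k(\mathbb{P})}.\] Therefore, if (in addition) the generalized Rényi entropy $H_k(\mathbb{P})$ exists, then for $\mathbb{P}^k$-almost every $(x^1,\dots,x^k)$, \[\lim_{n\to+\infty}\frac{M_n(x^1,\dots,x^k)}{\log n}=\frac{k}{(k-1)H_k(\mathbb{P})}.\]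
   Context: $\Omega=\mathcal{A}^{\mathbb{N}}$ for an alphabet $\mathcal{A}$, $\sigma$ is the left shift and $\mathbb{P}$ is a $\sigma$-invariant probability measure; $\mathbb{P}^k$ is the product measure. For $y\in\Omega$, $C_n(y)=\{z\in\Omega: z_i=y_i \text{ for } 0\leq i\leq n-1\}$ is the $n$-cylinder of $y$; $\mathcal{F}_0^n$ is the $\sigma$-algebra generated by $n$-cylinders. $\sum\mathbb{P}(C_n)^k$ denotes $\sum_{y\in\mathcal{A}^n}\mathbb{P}(C_n(y))^k$ (sum over all $n$-cylinders). $\underline{H}_k(\mathbb{P})=\liminf_{n\to\infty}\frac{\log\sum\mathbb{P}(C_n)^k}{-(k-1)n}$, $\overline{H}_k(\mathbb{P})$ the same with $\limsup$, and $H_k(\mathbb{P})$ their common value when equal. For $x^1,\dots,x^k\in\Omega$, \[M_n(x^1,\dots,x^k)=\max\{m: x^1_{i_1+j}=\cdots=x^k_{i_k+j}\text{ for } j=0,\dots,m-1 \text{ for some } 0\leq i_1,\dots,i_k\leq n-m\}.\] The system is $\alpha$-mixing if there is $\alpha:\mathbb{N}\to\mathbb{R}$ with $\alpha(g)\to0$ such that for all $m,n$, $A\in\mathcal{F}_0^n$, $B\in\mathcal{F}_0^m$: $|\mathbb{P}(A\cap\sigma^{-g-n}B)-\mathbb{P}(A)\mathbb{P}(B)|\leq\alpha(g)$; with exponential decay if $\alpha(g)$ decreases exponentially fast to $0$. It is $\psi$-mixing if there is $\psi$ with $\psi(g)\to0$ such that $|\mathbb{P}(A\cap\sigma^{-g-n}B)-\mathbb{P}(A)\mathbb{P}(B)|\leq\psi(g)\mathbb{P}(A)\mathbb{P}(B)$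 for all such $A,B$. *)

theory Defs
  imports "HOL-Probability.Probability"
begin

definition shift :: "(nat \<Rightarrow> 'a) \<Rightarrow> (nat \<Rightarrow> 'a)" where
  "shift x = (\<lambda>i. x (Suc i))"

definition shift_pre :: "nat \<Rightarrow> (nat \<Rightarrow> 'a) set \<Rightarrow> (nat \<Rightarrow> 'a) set" where
  "shift_pre t B = {z. (\<lambda>i. z (i + t)) \<in> B}"

text \<open>Cylinder determined by the word w (the |w|-cylinder of any y extending w).\<close>
definition cyl :: "'a list \<Rightarrow> (nat \<Rightarrow> 'a) set" where
  "cyl w = {z. \<forall>i<length w. z i = w ! i}"

text \<open>The sigma-algebra F_0^n generated by n-cylinders (finite alphabet: unions of n-cylinders).\<close>
definition cyl_alg :: "nat \<Rightarrow> (nat \<Rightarrow> 'a::finite) set set" where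
  "cyl_alg n = {A. \<exists>W \<subseteq> {w. length w = n}. A = \<Union> (cyl ` W)}"

definition symbolic_system :: "(nat \<Rightarrow> 'a) measure \<Rightarrow> bool" where
  "symbolic_system M \<longleftrightarrow> prob_space M
     \<and> sets M = sets (PiM UNIV (\<lambda>_. count_space UNIV))
     \<and> shift \<in> measurable M M \<and> distr M M shift = M"

definition cyl_sum :: "(nat \<Rightarrow> 'a::finite) measure \<Rightarrow> nat \<Rightarrow> nat \<Rightarrow> real" where
  "cyl_sum M k n = (\<Sum>w\<in>{w::'a list. length w = n}. measure M (cyl w) ^ k)"

definition renyi_lower :: "(nat \<Rightarrow> 'a::finite) measure \<Rightarrow> nat \<Rightarrow> ereal" where
  "renyi_lower M k = liminf (\<lambda>n. ereal (ln (cyl_sum M k n) / (- (real k - 1) * real n)))"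

definition renyi_upper :: "(nat \<Rightarrow> 'a::finite) measure \<Rightarrow> nat \<Rightarrow> ereal" where
  "renyi_upper M k = limsup (\<lambda>n. ereal (ln (cyl_sum M k n) / (- (real k - 1) * real n)))"

text \<open>M_n(x^1,...,x^k), with x^j written x (j-1), j < k.\<close>
definition match_len :: "nat \<Rightarrow> (nat \<Rightarrow> nat \<Rightarrow> 'a) \<Rightarrow> nat \<Rightarrow> nat" where
  "match_len k x n = Max {m. m \<le> n \<and> (\<exists>i::nat \<Rightarrow> nat. (\<forall>j<k. i j \<le> n - m) \<and>
      (\<forall>l<m. \<forall>j<k. \<forall>j'<k. x j (i j + l) = x j' (i j' + l)))}"

definition alpha_mixing_exp :: "(nat \<Rightarrow> 'a::finite) measure \<Rightarrow> bool" where
  "alpha_mixing_exp M \<longleftrightarrow> (\<exists>C \<theta>::real. 0 < \<theta> \<and> \<theta> < 1 \<and>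
     (\<forall>g n m A B. A \<in> cyl_alg n \<longrightarrow> B \<in> cyl_alg m \<longrightarrow>
        \<bar>measure M (A \<inter> shift_pre (g + n) B) - measure M A * measure M B\<bar> \<le> C * \<theta> ^ g))"

text \<open>psi-mixing with psi(g) = g^(-a); for g = 0 psi(0) = infinity imposes no constraint.\<close>
definition psi_mixing_poly :: "(nat \<Rightarrow> 'a::finite) measure \<Rightarrow> real \<Rightarrow> bool" where
  "psi_mixing_poly M a \<longleftrightarrow>
     (\<forall>g\<ge>1. \<forall>n m A B. A \<in> cyl_alg n \<longrightarrow> B \<in> cyl_alg m \<longrightarrow>
        \<bar>measure M (A \<inter> shift_pre (g + n) B) - measure M A * measure M B\<bar>
          \<le> real g powr (- a) * measure M A * measure M B)"

end

theory Submission
  imports Defs "HOL-Probability.Probability"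
begin

locale symsys =
  fixes M :: "(nat \<Rightarrow> 'a::finite) measure"
  assumes sys: "symbolic_system M"
begin

lemma prob: "prob_space M" using sys unfolding symbolic_system_def by auto

sublocale P: prob_space M by (rule prob)

lemma setsM: "sets M = sets (PiM UNIV (\<lambda>_. count_space UNIV))"
  using sys unfolding symbolic_system_def by auto

lemma spaceM[simp]: "space M = UNIV"
proof -
  have "space M = space (PiM UNIV (\<lambda>_::nat. count_space (UNIV::'a set)))"
    using setsM by (rule sets_eq_imp_space_eq)
  also have "\<dots> = UNIV" by (auto simp: space_PiM)
  finally show ?thesis .
qed

lemma shift_meas: "shift \<in> measurable M M"
  using sys unfolding symbolic_system_def by auto

lemma shift_inv: "distr M M shift = M"
  using sys unfolding symbolic_system_def by auto

lemma comp_meas: "(\<lambda>z. z i) \<in> measurable M (count_space UNIV)"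
proof -
  have "(\<lambda>z. z i) \<in> measurable (PiM UNIV (\<lambda>_::nat. count_space (UNIV::'a set))) (count_space UNIV)"
    by (rule measurable_component_singleton) auto
  then show ?thesis by (simp add: measurable_cong_sets[OF setsM refl])
qed

lemma coord_sets: "{z. z i = a} \<in> sets M"
proof -
  have "(\<lambda>z. z i) -` {a} \<inter> space M \<in> sets M"
    using comp_meas by (rule measurable_sets) auto
  then show ?thesis by (simp add: vimage_def)
qed

lemma cyl_sets[measurable]: "cyl w \<in> sets M"
proof -
  have "cyl w = {z\<in>space M. \<forall>i\<in>{..<length w}. z i = w ! i}"
    by (auto simp: cyl_def)
  also have "\<dots> \<in> sets M"
    using coord_sets by (intro sets.sets_Collect_finite_All) auto
  finally show ?thesis .
qed

lemma shift_pre_Suc: "shift_pre (Suc t) A = shift -` shift_pre t A"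
  by (auto simp: shift_pre_def shift_def)

lemma shift_pre_0[simp]: "shift_pre 0 A = A"
  by (auto simp: shift_pre_def)

lemma shift_pre_sets_measure:
  assumes "A \<in> sets M"
  shows "shift_pre t A \<in> sets M \<and> measure M (shift_pre t A) = measure M A"
proof (induction t)
  case 0 then show ?case using assms by simp
next
  case (Suc t)
  have s: "shift -` shift_pre t A \<inter> space M \<in> sets M"
    using Suc shift_meas by (intro measurable_sets) auto
  have "measure M (shift -` shift_pre t A \<inter> space M) = measure (distr M M shift) (shift_pre t A)"
    using Suc shift_meas by (subst measure_distr) auto
  also have "\<dots> = measure M (shift_pre t A)" using shift_inv by simp
  finally show ?case using s Suc by (simp add: shift_pre_Suc)
qed

lemma shift_pre_sets[measurable]: "A \<in> sets M \<Longrightarrow> shift_pre t A \<in> sets M"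
  using shift_pre_sets_measure by blast

lemma shift_pre_measure: "A \<in> sets M \<Longrightarrow> measure M (shift_pre t A) = measure M A"
  using shift_pre_sets_measure by blast

end

lemma shift_pre_add: "shift_pre a (shift_pre c B) = shift_pre (a + c) B"
  by (simp add: shift_pre_def ac_simps)

lemma shift_pre_Int: "shift_pre a (A \<inter> B) = shift_pre a A \<inter> shift_pre a B"
  by (auto simp: shift_pre_def)

lemma shift_pre_cyl_iff: "z \<in> shift_pre a (cyl w) \<longleftrightarrow> (\<forall>i<length w. z (a + i) = w ! i)"
  by (auto simp: shift_pre_def cyl_def add.commute)

lemma cyl_Int_same_len:
  assumes "length w = length w'" "w \<noteq> w'"
  shows "cyl w \<inter> cyl w' = {}"
proof -
  obtain i where "i < length w" "w ! i \<noteq> w' ! i" using assms nth_equalityI[of w w'] by auto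
  then show ?thesis using assms by (auto simp: cyl_def)
qed

lemma finite_words[simp]: "finite {w::'a::finite list. length w = m}"
  using finite_lists_length_eq[of "UNIV::'a set" m] by simp

lemma card_words: "card {w::'a::finite list. length w = m} = CARD('a) ^ m"
  using card_lists_length_eq[of "UNIV::'a set" m] by simp

lemma cyl_cover: "(\<Union>w\<in>{w::'a list. length w = m}. cyl w) = UNIV"
proof -
  { fix z :: "nat \<Rightarrow> 'a"
    have "z \<in> cyl (map z [0..<m])" by (auto simp: cyl_def)
    moreover have "length (map z [0..<m]) = m" by simp
    ultimately have "\<exists>w. length w = m \<and> z \<in> cyl w" by blast }
  then show ?thesis by auto
qed

context symsys begin

lemma sum_cyl: "(\<Sum>w\<in>{w. length w = m}. measure M (cyl w)) = 1"
proof -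
  have "(\<Sum>w\<in>{w. length w = m}. measure M (cyl w)) = measure M (\<Union>w\<in>{w. length w = m}. cyl w)"
    by (rule P.finite_measure_finite_Union[symmetric]) (use cyl_Int_same_len in \<open>auto simp: disjoint_family_on_def\<close>)
  also have "\<dots> = 1" using P.prob_space by (simp add: cyl_cover)
  finally show ?thesis .
qed

end

lemma (in prob_space) second_moment:
  fixes A :: "'i \<Rightarrow> 'a set"
  assumes T: "finite T" and A: "\<And>t. t \<in> T \<Longrightarrow> A t \<in> events"
    and mu: "\<mu> = (\<Sum>t\<in>T. prob (A t))" "\<mu> > 0"
  shows "prob (space M - (\<Union>t\<in>T. A t)) \<le> ((\<Sum>t\<in>T. \<Sum>t'\<in>T. prob (A t \<inter> A t')) - \<mu>^2) / \<mu>^2"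
proof -
  define S where "S x = (\<Sum>t\<in>T. indicator (A t) x :: real)" for x
  define B where "B = space M - (\<Union>t\<in>T. A t)"
  have Bs: "B \<in> events" unfolding B_def using A T by auto
  have ii: "integrable M (indicator C :: _ \<Rightarrow> real)" if "C \<in> events" for C
    using that by (simp add: integrable_indicator_iff emeasure_finite less_top[symmetric] sets.Int_space_eq2)
  have iS: "integrable M S" unfolding S_def using ii A by auto
  have iA: "integrable M (indicator (A t) :: _ \<Rightarrow> real)" if "t \<in> T" for t using ii A that by auto
  have iAA: "integrable M (indicator (A t \<inter> A t') :: _ \<Rightarrow> real)" if "t \<in> T" "t' \<in> T" for t t'
     using ii A that by auto
  have intS: "integral\<^sup>L M S = \<mu>"
    unfolding S_def mu using iA A by (simp add: sets.Int_space_eq2)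
  have SS: "S x * S x = (\<Sum>t\<in>T. \<Sum>t'\<in>T. indicator (A t \<inter> A t') x)" for x
    unfolding S_def sum_product by (simp add: indicator_inter_arith)
  have iSS: "integrable M (\<lambda>x. S x * S x)" unfolding SS using ii A by auto
  have intSS: "integral\<^sup>L M (\<lambda>x. S x * S x) = (\<Sum>t\<in>T. \<Sum>t'\<in>T. prob (A t \<inter> A t'))"
    unfolding SS using iAA A by (simp add: sets.Int_space_eq2 Int_assoc)
  have sq: "(S x - \<mu>)^2 = S x * S x - 2 * \<mu> * S x + \<mu>^2" for x
    by (simp add: power2_eq_square algebra_simps)
  have i2: "integrable M (\<lambda>x. (S x - \<mu>)^2)" unfolding sq using iS iSS by auto
  have int2: "integral\<^sup>L M (\<lambda>x. (S x - \<mu>)^2) = (\<Sum>t\<in>T. \<Sum>t'\<in>T. prob (A t \<inter> A t')) - \<mu>^2"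
    unfolding sq using iS iSS intS intSS prob_space by (simp add: power2_eq_square)
  have le: "\<mu>^2 * indicator B x \<le> (S x - \<mu>)^2" for x
  proof (cases "x \<in> B")
    case True
    then have "S x = 0" unfolding S_def B_def by (auto intro!: sum.neutral)
    then show ?thesis using True by simp
  qed simp
  have "\<mu>^2 * prob B = integral\<^sup>L M (\<lambda>x. \<mu>^2 * indicator B x)"
    using Bs by (simp add: sets.Int_space_eq2)
  also have "\<dots> \<le> integral\<^sup>L M (\<lambda>x. (S x - \<mu>)^2)"
    using ii[OF Bs] i2 le by (intro integral_mono) auto
  finally have "\<mu>^2 * prob B \<le> (\<Sum>t\<in>T. \<Sum>t'\<in>T. prob (A t \<inter> A t')) - \<mu>^2" using int2 by simp
  then show ?thesis unfolding B_def[symmetric] using mu by (simp add: field_simps)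
qed

locale symk = symsys M for M :: "(nat \<Rightarrow> 'a::finite) measure" +
  fixes k :: nat
  assumes k2: "2 \<le> k"
begin

abbreviation X where "X \<equiv> PiM {..<k} (\<lambda>_. M)"

sublocale PX: finite_product_prob_space "\<lambda>_. M" "{..<k}"
  by unfold_locales auto

lemma probX: "prob_space X" by (rule PX.prob_space_axioms)

lemma spaceX: "space X = PiE {..<k} (\<lambda>_. UNIV)"
  by (simp add: space_PiM)

definition p :: "'a list \<Rightarrow> real" where "p w = measure M (cyl w)"

definition E :: "(nat \<Rightarrow> nat) \<Rightarrow> 'a list \<Rightarrow> (nat \<Rightarrow> nat \<Rightarrow> 'a) set" where
  "E pos w = PiE {..<k} (\<lambda>j. shift_pre (pos j) (cyl w))"

definition MA :: "(nat \<Rightarrow> nat) \<Rightarrow> nat \<Rightarrow> (nat \<Rightarrow> nat \<Rightarrow> 'a) set" where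
  "MA pos m = (\<Union>w\<in>{w. length w = m}. E pos w)"

lemma p_nonneg: "0 \<le> p w" by (simp add: p_def)
lemma p_le1: "p w \<le> 1" by (simp add: p_def)
lemma sum_p: "(\<Sum>w\<in>{w. length w = m}. p w) = 1" using sum_cyl by (simp add: p_def)

lemma E_sets[measurable]: "E pos w \<in> sets X"
  unfolding E_def by (rule sets_PiM_I_finite) auto

lemma E_measure: "measure X (E pos w) = p w ^ k"
proof -
  have "measure X (E pos w) = (\<Prod>j\<in>{..<k}. measure M (shift_pre (pos j) (cyl w)))"
    unfolding E_def by (rule PX.finite_measure_PiM_emb) auto
  then show ?thesis by (simp add: shift_pre_measure p_def)
qed

lemma MA_sets[measurable]: "MA pos m \<in> sets X"
  unfolding MA_def by (intro sets.finite_UN) auto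

lemma E_disj:
  assumes "length w = length w'" "w \<noteq> w'"
  shows "E pos w \<inter> E pos w' = {}"
proof -
  have "0 \<in> {..<k}" using k2 by auto
  have "shift_pre (pos 0) (cyl w) \<inter> shift_pre (pos 0) (cyl w') = {}"
    using cyl_Int_same_len[OF assms] by (auto simp: shift_pre_def)
  then show ?thesis unfolding E_def using \<open>0 \<in> {..<k}\<close> by (auto simp: PiE_iff)
qed

lemma MA_measure: "measure X (MA pos m) = cyl_sum M k m"
proof -
  have "measure X (MA pos m) = (\<Sum>w\<in>{w. length w = m}. measure X (E pos w))"
    unfolding MA_def
    by (rule PX.finite_measure_finite_Union) (use E_disj in \<open>auto simp: disjoint_family_on_def\<close>)
  then show ?thesis by (simp add: E_measure cyl_sum_def p_def)
qed

lemma MA_iff: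
  assumes "x \<in> space X"
  shows "x \<in> MA pos m \<longleftrightarrow> (\<forall>l<m. \<forall>j<k. \<forall>j'<k. x j (pos j + l) = x j' (pos j' + l))"
proof
  assume "x \<in> MA pos m"
  then obtain w where w: "length w = m" "x \<in> E pos w" unfolding MA_def by auto
  have "x j (pos j + l) = w ! l" if "j < k" "l < m" for j l
    using w that unfolding E_def PiE_iff shift_pre_cyl_iff by auto
  then show "\<forall>l<m. \<forall>j<k. \<forall>j'<k. x j (pos j + l) = x j' (pos j' + l)" by simp
next
  assume H: "\<forall>l<m. \<forall>j<k. \<forall>j'<k. x j (pos j + l) = x j' (pos j' + l)"
  define w where "w = map (\<lambda>l. x 0 (pos 0 + l)) [0..<m]"
  have "0 < k" using k2 by auto
  have lw: "length w = m" by (simp add: w_def)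
  have "x j \<in> shift_pre (pos j) (cyl w)" if "j < k" for j
    unfolding shift_pre_cyl_iff lw
  proof (intro allI impI)
    fix i assume "i < m"
    then have "x j (pos j + i) = x 0 (pos 0 + i)" using H that \<open>0 < k\<close> by blast
    then show "x j (pos j + i) = w ! i" using \<open>i < m\<close> by (simp add: w_def)
  qed
  moreover have "x \<in> extensional {..<k}" using assms by (simp add: spaceX PiE_def)
  ultimately have "x \<in> E pos w" unfolding E_def by (auto simp: PiE_def)
  then show "x \<in> MA pos m" unfolding MA_def using lw by auto
qed

end

definition MLset :: "nat \<Rightarrow> (nat \<Rightarrow> nat \<Rightarrow> 'a) \<Rightarrow> nat \<Rightarrow> nat set" where
  "MLset k x n = {m. m \<le> n \<and> (\<exists>i::nat \<Rightarrow> nat. (\<forall>j<k. i j \<le> n - m) \<and>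
      (\<forall>l<m. \<forall>j<k. \<forall>j'<k. x j (i j + l) = x j' (i j' + l)))}"

lemma match_len_MLset: "match_len k x n = Max (MLset k x n)"
  by (simp add: match_len_def MLset_def)

lemma MLset_finite: "finite (MLset k x n)"
  by (rule finite_subset[of _ "{..n}"]) (auto simp: MLset_def)

lemma MLset_0: "0 \<in> MLset k x n"
  by (auto simp: MLset_def intro!: exI[of _ "\<lambda>_. 0"])

lemma match_len_le: "match_len k x n \<le> n"
  unfolding match_len_MLset using MLset_finite MLset_0
  by (subst Max_le_iff) (auto simp: MLset_def)

lemma match_len_ge:
  assumes "m \<le> n" "\<forall>j<k. i j \<le> n - m" "\<forall>l<m. \<forall>j<k. \<forall>j'<k. x j (i j + l) = x j' (i j' + l)"
  shows "m \<le> match_len k x n"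
  unfolding match_len_MLset using assms MLset_finite
  by (intro Max_ge) (auto simp: MLset_def)

lemma match_len_witness:
  "\<exists>i. (\<forall>j<k. i j \<le> n - match_len k x n) \<and>
      (\<forall>l<match_len k x n. \<forall>j<k. \<forall>j'<k. x j (i j + l) = x j' (i j' + l))"
proof -
  have "match_len k x n \<in> MLset k x n"
    unfolding match_len_MLset by (rule Max_in[OF MLset_finite]) (use MLset_0[of k x n] in auto)
  then show ?thesis by (auto simp: MLset_def)
qed

lemma match_len_mono:
  assumes "n \<le> n'"
  shows "match_len k x n \<le> match_len k x n'"
proof -
  obtain i where i: "\<forall>j<k. i j \<le> n - match_len k x n"
     "\<forall>l<match_len k x n. \<forall>j<k. \<forall>j'<k. x j (i j + l) = x j' (i j' + l)"
    using match_len_witness by blast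
  show ?thesis
    using i assms match_len_le[of k x n] by (intro match_len_ge[of _ _ _ i]) force+
qed

context symk begin

lemma upper_event:
  assumes "x \<in> space X" "m \<le> match_len k x n"
  shows "x \<in> (\<Union>pos\<in>PiE {..<k} (\<lambda>_. {..n-m}). MA pos m)"
proof -
  obtain i where i: "\<forall>j<k. i j \<le> n - match_len k x n"
     "\<forall>l<match_len k x n. \<forall>j<k. \<forall>j'<k. x j (i j + l) = x j' (i j' + l)"
    using match_len_witness by blast
  define pos where "pos = restrict i {..<k}"
  have "i j \<le> n - m" if "j < k" for j
  proof -
    have "i j \<le> n - match_len k x n" using i(1) that by blast
    moreover have "n - match_len k x n \<le> n - m" using assms(2) by (rule diff_le_mono2)
    ultimately show ?thesis by (rule le_trans)
  qed
  then have "pos \<in> PiE {..<k} (\<lambda>_. {..n-m})" by (auto simp: pos_def)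
  moreover have "x j (pos j + l) = x j' (pos j' + l)" if "l < m" "j < k" "j' < k" for l j j'
  proof -
    have "l < match_len k x n" using that(1) assms(2) by linarith
    then have "x j (i j + l) = x j' (i j' + l)" using i(2) that(2,3) by blast
    then show ?thesis using that(2,3) by (simp add: pos_def)
  qed
  then have "x \<in> MA pos m"
    using MA_iff[OF assms(1), of pos m] by blast
  ultimately show ?thesis by blast
qed

lemma upper_bound_prob:
  "measure X (\<Union>pos\<in>PiE {..<k} (\<lambda>_. {..n-m}). MA pos m) \<le> real (n - m + 1) ^ k * cyl_sum M k m"
proof -
  have "measure X (\<Union>pos\<in>PiE {..<k} (\<lambda>_. {..n-m}). MA pos m)
        \<le> (\<Sum>pos\<in>PiE {..<k} (\<lambda>_. {..n-m}). measure X (MA pos m))"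
    by (rule PX.finite_measure_subadditive_finite) (simp add: finite_PiE, use MA_sets in blast)
  also have "\<dots> = real (card (PiE {..<k} (\<lambda>_. {..n-m}))) * cyl_sum M k m"
    by (simp add: MA_measure)
  also have "card (PiE {..<k} (\<lambda>_. {..n-m})) = (n - m + 1) ^ k"
    by (simp add: card_PiE)
  finally show ?thesis by simp
qed

lemma lower_event:
  assumes "x \<in> space X" "x \<in> MA pos m" "\<forall>j<k. pos j + m \<le> n"
  shows "m \<le> match_len k x n"
proof -
  have "0 < k" using k2 by auto
  then have "m \<le> n" using assms(3) by force
  have "\<forall>j<k. pos j \<le> n - m" using assms(3) by force
  moreover have "\<forall>l<m. \<forall>j<k. \<forall>j'<k. x j (pos j + l) = x j' (pos j' + l)"
    using MA_iff[OF assms(1)] assms(2) by blast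
  ultimately show ?thesis using \<open>m \<le> n\<close> by (rule match_len_ge[rotated])
qed

end

context symk begin

lemma words_ne: "{w::'a list. length w = m} \<noteq> {}"
  by (auto intro!: exI[of _ "replicate m undefined"])

lemma big_word: "\<exists>w. length w = m \<and> p w \<ge> 1 / real CARD('a) ^ m"
proof (rule ccontr)
  assume "\<not> ?thesis"
  then have lt: "\<forall>w\<in>{w. length w = m}. p w < 1 / real CARD('a) ^ m" by auto
  have "(\<Sum>w\<in>{w. length w = m}. p w) < (\<Sum>w\<in>{w::'a list. length w = m}. 1 / real CARD('a) ^ m)"
    by (rule sum_strict_mono[OF finite_words words_ne]) (use lt in auto)
  also have "\<dots> = 1" using card_words[where 'a='a, of m] by simp
  finally show False using sum_p by simp
qed

lemma cs_ge: "cyl_sum M k m \<ge> (1 / real CARD('a) ^ m) ^ k"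
proof -
  obtain w where w: "length w = m" "p w \<ge> 1 / real CARD('a) ^ m" using big_word by blast
  have "(1 / real CARD('a) ^ m) ^ k \<le> p w ^ k" using w by (intro power_mono) auto
  also have "\<dots> \<le> cyl_sum M k m" unfolding cyl_sum_def p_def[symmetric]
    using w by (intro member_le_sum) (auto simp: p_nonneg)
  finally show ?thesis .
qed

lemma cs_pos: "cyl_sum M k m > 0"
  by (rule less_le_trans[OF _ cs_ge]) simp

lemma cs_le1: "cyl_sum M k m \<le> 1"
proof -
  have "cyl_sum M k m = (\<Sum>w\<in>{w. length w = m}. p w ^ k)" by (simp add: cyl_sum_def p_def)
  also have "\<dots> \<le> (\<Sum>w\<in>{w. length w = m}. p w)"
  proof (rule sum_mono)
    fix w
    have "p w ^ k = p w * p w ^ (k - 1)" using k2 by (simp add: power_eq_if)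
    also have "\<dots> \<le> p w * 1" using p_nonneg p_le1 by (intro mult_left_mono power_le_one) auto
    finally show "p w ^ k \<le> p w" by simp
  qed
  finally show ?thesis using sum_p by simp
qed

definition rat :: "nat \<Rightarrow> real" where
  "rat n = ln (cyl_sum M k n) / (- (real k - 1) * real n)"

lemma renyi_lower_rat: "renyi_lower M k = liminf (\<lambda>n. ereal (rat n))"
  by (simp add: renyi_lower_def rat_def)
lemma renyi_upper_rat: "renyi_upper M k = limsup (\<lambda>n. ereal (rat n))"
  by (simp add: renyi_upper_def rat_def)

lemma rat_bound:
  assumes "n \<ge> 1"
  shows "rat n \<le> real k * ln (real CARD('a))"
proof -
  have C: "real CARD('a) \<ge> 1" by simp
  have k1: "real k - 1 \<ge> 1" using k2 by simp
  have "ln ((1 / real CARD('a) ^ n) ^ k) \<le> ln (cyl_sum M k n)"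
    using cs_ge[of n] cs_pos[of n] by (subst ln_le_cancel_iff) auto
  moreover have "ln ((1 / real CARD('a) ^ n) ^ k) = - (real k * real n * ln (real CARD('a)))"
    by (simp add: ln_realpow ln_div)
  ultimately have L: "- ln (cyl_sum M k n) \<le> real k * real n * ln (real CARD('a))" by simp
  have pos: "0 < (real k - 1) * real n" using k1 assms by simp
  have "rat n = (- ln (cyl_sum M k n)) / ((real k - 1) * real n)"
    by (simp only: rat_def mult_minus_left divide_minus_right divide_minus_left)
  also have "\<dots> \<le> real k * real n * ln (real CARD('a)) / ((real k - 1) * real n)"
    using L pos by (intro divide_right_mono) auto
  also have "\<dots> \<le> real k * real n * ln (real CARD('a)) / (1 * real n)"
    using assms k1 C by (intro divide_left_mono mult_right_mono mult_nonneg_nonneg) auto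
  also have "\<dots> = real k * ln (real CARD('a))" using assms by simp
  finally show ?thesis .
qed

lemma renyi_upper_fin: "renyi_upper M k \<le> ereal (real k * ln (real CARD('a)))"
  unfolding renyi_upper_rat
  by (rule Limsup_bounded) (use rat_bound in \<open>auto simp: eventually_sequentially intro!: exI[of _ 1]\<close>)

lemma renyi_lower_le_upper: "renyi_lower M k \<le> renyi_upper M k"
  unfolding renyi_upper_rat renyi_lower_rat by (rule Liminf_le_Limsup) simp

lemma cs_upper_ev:
  assumes "ereal H' < renyi_lower M k"
  shows "eventually (\<lambda>m. cyl_sum M k m \<le> exp (- (real k - 1) * real m * H')) sequentially"
proof -
  have "eventually (\<lambda>n. ereal H' < ereal (rat n)) sequentially"
    using assms unfolding renyi_lower_rat by (rule less_LiminfD)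
  moreover have "eventually (\<lambda>n. n \<ge> (1::nat)) sequentially" by (rule eventually_ge_at_top)
  ultimately show ?thesis
  proof eventually_elim
    case (elim n)
    have pos: "0 < (real k - 1) * real n" using k2 elim by simp
    have "H' < ln (cyl_sum M k n) / (- (real k - 1) * real n)" using elim unfolding rat_def by simp
    then have "ln (cyl_sum M k n) < H' * (- (real k - 1) * real n)"
      using pos by (subst (asm) neg_less_divide_eq) (simp only: mult_minus_left neg_less_0_iff_less, simp)
    then have "ln (cyl_sum M k n) \<le> - (real k - 1) * real n * H'" by (simp add: algebra_simps)
    then show ?case using cs_pos by (subst ln_le_cancel_iff[symmetric]) auto
  qed
qed

lemma cs_lower_ev:
  assumes "renyi_upper M k < ereal H''"
  shows "eventually (\<lambda>m. exp (- (real k - 1) * real m * H'') \<le> cyl_sum M k m) sequentially"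
proof -
  have "eventually (\<lambda>n. ereal (rat n) < ereal H'') sequentially"
    using assms unfolding renyi_upper_rat by (rule Limsup_lessD)
  moreover have "eventually (\<lambda>n. n \<ge> (1::nat)) sequentially" by (rule eventually_ge_at_top)
  ultimately show ?thesis
  proof eventually_elim
    case (elim n)
    have pos: "0 < (real k - 1) * real n" using k2 elim by simp
    have "ln (cyl_sum M k n) / (- (real k - 1) * real n) < H''" using elim unfolding rat_def by simp
    then have "H'' * (- (real k - 1) * real n) < ln (cyl_sum M k n)"
      using pos by (subst (asm) neg_divide_less_eq) (simp only: mult_minus_left neg_less_0_iff_less, simp)
    then have "- (real k - 1) * real n * H'' \<le> ln (cyl_sum M k n)" by (simp add: algebra_simps)
    then show ?case using cs_pos by (subst ln_le_cancel_iff[symmetric]) auto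
  qed
qed

end

lemma inv_ln_tendsto: "((\<lambda>n::nat. K / ln (real n)) \<longlongrightarrow> 0) sequentially"
proof -
  have "filterlim (\<lambda>n::nat. ln (real n)) at_top sequentially"
    by (rule filterlim_compose[OF ln_at_top filterlim_real_sequentially])
  then have "filterlim (\<lambda>n::nat. ln (real n)) at_infinity sequentially"
    by (rule filterlim_at_top_imp_at_infinity)
  then show ?thesis by (intro tendsto_divide_0[OF tendsto_const])
qed

lemma limsup_from_bound:
  assumes "eventually (\<lambda>n. f n \<le> c + K / ln (real n)) sequentially"
  shows "limsup (\<lambda>n. ereal (f n)) \<le> ereal c"
proof -
  have "limsup (\<lambda>n. ereal (f n)) \<le> limsup (\<lambda>n. ereal (c + K / ln (real n)))"
    using assms by (intro Limsup_mono) (auto elim: eventually_mono)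
  also have "\<dots> = ereal c"
  proof (rule lim_imp_Limsup)
    show "((\<lambda>n. ereal (c + K / ln (real n))) \<longlongrightarrow> ereal c) sequentially"
      using tendsto_add[OF tendsto_const[of c] inv_ln_tendsto[of K]] by (intro tendsto_ereal) simp
  qed simp
  finally show ?thesis .
qed

lemma liminf_from_bound:
  assumes "eventually (\<lambda>n. c - K / ln (real n) \<le> f n) sequentially"
  shows "ereal c \<le> liminf (\<lambda>n. ereal (f n))"
proof -
  have "ereal c = liminf (\<lambda>n. ereal (c - K / ln (real n)))"
  proof (rule lim_imp_Liminf[symmetric])
    show "((\<lambda>n. ereal (c - K / ln (real n))) \<longlongrightarrow> ereal c) sequentially"
      using tendsto_diff[OF tendsto_const[of c] inv_ln_tendsto[of K]] by (intro tendsto_ereal) simp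
  qed simp
  also have "\<dots> \<le> liminf (\<lambda>n. ereal (f n))"
    using assms by (intro Liminf_mono) (auto elim: eventually_mono)
  finally show ?thesis .
qed

lemma dyadic_block:
  assumes "(1::nat) \<le> n"
  obtains l where "2^l \<le> n" "n < 2^(l+1)"
  using ex_power_ivl1[of 2 n] assms by auto

context symk begin

lemma upper_c:
  assumes H'pos: "0 < H'" and HL: "ereal H' < renyi_lower M k"
    and cH: "real k < c * (real k - 1) * H'"
  shows "AE x in X. limsup (\<lambda>n. ereal (real (match_len k x n) / ln (real n))) \<le> ereal c"
proof -
  have k1: "1 \<le> real k - 1" using k2 by simp
  have cpos: "0 < c"
  proof (rule ccontr)
    assume "\<not> 0 < c"
    then have "c * ((real k - 1) * H') \<le> 0" using k1 H'pos by (intro mult_nonpos_nonneg) auto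
    then show False using cH k2 by (simp add: mult.assoc)
  qed
  define E where "E = real k - c * (real k - 1) * H'"
  have Eneg: "E < 0" using cH by (simp add: E_def)
  define \<rho> where "\<rho> = exp (E * ln 2)"
  have "E * ln 2 < 0" using Eneg by (simp add: mult_neg_pos)
  then have \<rho>: "0 < \<rho>" "\<rho> < 1" by (auto simp: \<rho>_def)
  define m where "m l = nat \<lceil>c * real l * ln 2\<rceil>" for l :: nat
  have m_ge: "c * real l * ln 2 \<le> real (m l)" for l unfolding m_def by (rule real_nat_ceiling_ge)
  have m_le: "real (m l) \<le> c * real l * ln 2 + 1" for l
  proof -
    have "0 \<le> c * real l * ln 2" using cpos by simp
    then show ?thesis unfolding m_def by linarith
  qed
  obtain m0 where m0: "\<And>mm. mm \<ge> m0 \<Longrightarrow> cyl_sum M k mm \<le> exp (- (real k - 1) * real mm * H')"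
    using cs_upper_ev[OF HL] unfolding eventually_sequentially by blast
  obtain l0 :: nat where l0: "real m0 / (c * ln 2) \<le> real l0" using real_arch_simple by blast
  have ml0: "m0 \<le> m l" if "l \<ge> l0" for l
  proof -
    have "real m0 \<le> c * ln 2 * real l0" using l0 cpos by (simp add: field_simps)
    also have "\<dots> \<le> c * ln 2 * real l" using that cpos by (intro mult_left_mono) auto
    also have "\<dots> \<le> real (m l)" using m_ge[of l] by (simp add: ac_simps)
    finally show ?thesis by simp
  qed
  define B where "B l = (\<Union>pos\<in>PiE {..<k} (\<lambda>_. {..2^(l+1) - m l}). MA pos (m l))" for l
  have Bs: "B l \<in> sets X" for l unfolding B_def
    by (intro sets.finite_UN) (auto simp: finite_PiE)
  have Bm: "measure X (B l) \<le> 3^k * \<rho>^l" if "l \<ge> l0" for l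
  proof -
    have "measure X (B l) \<le> real (2^(l+1) - m l + 1) ^ k * cyl_sum M k (m l)"
      unfolding B_def by (rule upper_bound_prob)
    also have "\<dots> \<le> (3 * 2^l) ^ k * exp (- (real k - 1) * real (m l) * H')"
    proof (intro mult_mono power_mono m0 ml0 that)
      have "2^(l+1) - m l + 1 \<le> 2^(l+1) + (1::nat)" by simp
      then have "real (2^(l+1) - m l + 1) \<le> real (2^(l+1) + 1::nat)" by (simp only: of_nat_le_iff)
      also have "\<dots> \<le> 3 * 2^l" by simp
      finally show "real (2^(l+1) - m l + 1) \<le> 3 * 2^l" .
    qed (use cs_pos[of "m l"] in auto)
    also have "\<dots> \<le> (3 * 2^l) ^ k * exp (- (real k - 1) * (c * real l * ln 2) * H')"
    proof (rule mult_left_mono)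
      have "((real k - 1) * H') * (c * real l * ln 2) \<le> ((real k - 1) * H') * real (m l)"
        using k1 H'pos m_ge[of l] by (intro mult_left_mono) auto
      then have "- (real k - 1) * real (m l) * H' \<le> - (real k - 1) * (c * real l * ln 2) * H'"
        by (simp add: algebra_simps)
      then show "exp (- (real k - 1) * real (m l) * H') \<le> exp (- (real k - 1) * (c * real l * ln 2) * H')"
        by simp
    qed simp
    also have "\<dots> = 3^k * \<rho>^l"
    proof -
      have "(2::real)^l = exp (real l * ln 2)" by (simp add: exp_of_nat_mult)
      then have "(3 * 2^l :: real) ^ k = 3^k * exp (real k * (real l * ln 2))"
        by (simp add: power_mult_distrib exp_of_nat_mult)
      moreover have "\<rho>^l = exp (real l * (E * ln 2))" unfolding \<rho>_def by (simp add: exp_of_nat_mult)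
      ultimately show ?thesis
        by (simp add: E_def exp_add[symmetric] algebra_simps)
    qed
    finally show ?thesis .
  qed
  have summ: "summable (\<lambda>l. measure X (B l))"
  proof (rule summable_comparison_test_ev)
    show "eventually (\<lambda>l. norm (measure X (B l)) \<le> 3^k * \<rho>^l) sequentially"
      using Bm unfolding eventually_sequentially by auto
    show "summable (\<lambda>l. 3^k * \<rho>^l)" using \<rho> by (intro summable_mult summable_geometric) auto
  qed
  have "AE x in X. eventually (\<lambda>l. x \<in> space X - B l) sequentially"
    by (rule borel_cantelli_AE1[OF Bs _ summ]) (simp add: less_top[symmetric])
  then show ?thesis
  proof (rule AE_mp[OF _ AE_I2[OF impI]])
    fix x assume xs: "x \<in> space X" and ev: "eventually (\<lambda>l. x \<in> space X - B l) sequentially"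
    obtain L where L: "\<And>l. l \<ge> L \<Longrightarrow> x \<notin> B l" using ev unfolding eventually_sequentially by blast
    have MLb: "match_len k x (2^(l+1)) < m l" if "l \<ge> L" for l
    proof (rule ccontr)
      assume "\<not> ?thesis"
      then have "x \<in> B l" unfolding B_def by (intro upper_event xs) simp
      then show False using L that by blast
    qed
    show "limsup (\<lambda>n. ereal (real (match_len k x n) / ln (real n))) \<le> ereal c"
    proof (rule limsup_from_bound[where K=1])
      show "eventually (\<lambda>n. real (match_len k x n) / ln (real n) \<le> c + 1 / ln (real n)) sequentially"
        unfolding eventually_sequentially
      proof (intro exI[of _ "max (2^L) 3"] allI impI)
        fix n :: nat assume n: "max (2^L) 3 \<le> n"
        then obtain l where l: "2^l \<le> n" "n < 2^(l+1)" using dyadic_block[of n] by auto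
        have "L \<le> l"
        proof (rule ccontr)
          assume "\<not> L \<le> l"
          then have "(2::nat)^(l+1) \<le> 2^L" by (intro power_increasing) auto
          then show False using l n by simp
        qed
        have "match_len k x n \<le> match_len k x (2^(l+1))" using l by (intro match_len_mono) simp
        then have a: "real (match_len k x n) < real (m l)" using MLb[OF \<open>L \<le> l\<close>] by simp
        have b: "real (m l) \<le> c * (real l * ln 2) + 1" using m_le[of l] by (simp add: ac_simps)
        have "real l * ln 2 = ln (2^l)" by (simp add: ln_realpow)
        have p2: "(2::real)^l \<le> real n" using l(1) by (metis of_nat_le_iff of_nat_numeral of_nat_power)
        have np: "0 < real n" using n by simp
        have "ln ((2::real)^l) \<le> ln (real n)" using p2 np by (subst ln_le_cancel_iff) auto
        then have "real l * ln 2 \<le> ln (real n)" by (simp add: ln_realpow)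
        then have "c * (real l * ln 2) \<le> c * ln (real n)" using cpos by (intro mult_left_mono) auto
        then have "real (match_len k x n) \<le> c * ln (real n) + 1" using a b by linarith
        moreover have "0 < ln (real n)" using n by simp
        ultimately show "real (match_len k x n) / ln (real n) \<le> c + 1 / ln (real n)"
          by (simp add: divide_le_eq add_divide_distrib algebra_simps)
      qed
    qed
  qed
qed

end

lemma pow_add_le:
  fixes u v :: real
  assumes "0 \<le> u" "0 \<le> v"
  shows "(u+v)^k \<le> v^k + real k * u * (u+v)^(k-1)"
proof (induction k)
  case 0 then show ?case by simp
next
  case (Suc k)
  have uv: "0 \<le> u + v" using assms by simp
  have "(u+v)^Suc k = (u+v) * (u+v)^k" by simp
  also have "\<dots> \<le> (u+v) * (v^k + real k * u * (u+v)^(k-1))"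
    using Suc uv by (intro mult_left_mono) auto
  also have "\<dots> = v^Suc k + u * v^k + real k * u * ((u+v) * (u+v)^(k-1))"
    by (simp add: algebra_simps)
  also have "\<dots> \<le> v^Suc k + u * (u+v)^k + real k * u * (u+v)^k"
  proof -
    have "v^k \<le> (u+v)^k" using assms by (intro power_mono) auto
    then have a: "u * v^k \<le> u * (u+v)^k" using assms by (intro mult_left_mono) auto
    have b: "real k * u * ((u+v) * (u+v)^(k-1)) \<le> real k * u * (u+v)^k"
    proof (cases k)
      case 0 then show ?thesis by simp
    next
      case (Suc k') then show ?thesis by simp
    qed
    show ?thesis using a b by linarith
  qed
  also have "\<dots> = v^Suc k + real (Suc k) * u * (u+v)^(Suc k - 1)"
    by (simp add: algebra_simps)
  finally show ?case .
qed

lemma pow3_le: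
  fixes a b c :: real
  assumes "0 \<le> a" "0 \<le> b" "0 \<le> c"
  shows "(a+b+c)^r \<le> 3^r * (a^r + b^r + c^r)"
proof -
  define z where "z = max a (max b c)"
  have "a + b + c \<le> 3 * z" unfolding z_def by linarith
  then have "(a+b+c)^r \<le> (3*z)^r" using assms by (intro power_mono) auto
  also have "\<dots> = 3^r * z^r" by (simp add: power_mult_distrib)
  also have "z^r \<le> a^r + b^r + c^r"
    using assms unfolding z_def
    by (cases "a \<le> max b c"; cases "b \<le> c") (auto simp: max_def)
  then have "3^r * z^r \<le> 3^r * (a^r + b^r + c^r)" by simp
  finally show ?thesis .
qed


lemma pow_powr_aux:
  fixes p :: real
  assumes "0 \<le> p" "2 \<le> k"
  shows "p^(k-1) = (p^k) powr ((real k - 1) / real k)"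
proof (cases "p = 0")
  case True
  obtain j where "k = Suc (Suc j)" using assms(2) by (metis add_2_eq_Suc le_Suc_ex)
  then show ?thesis using True by simp
next
  case False
  then have pp: "0 < p" using assms by simp
  have "(p^k) powr ((real k - 1) / real k) = (p powr real k) powr ((real k - 1) / real k)"
    using pp by (simp add: powr_realpow)
  also have "\<dots> = p powr (real k - 1)" using assms by (simp add: powr_powr)
  also have "\<dots> = p powr (real (k - 1))" using assms by (simp add: of_nat_diff)
  also have "\<dots> = p^(k-1)" using pp by (simp add: powr_realpow)
  finally show ?thesis by simp
qed

lemma alg_bound:
  fixes W :: "'w set" and p :: "'w \<Rightarrow> real" and N \<beta> \<delta> cs :: real and k :: nat
  assumes W: "finite W" and p: "\<And>w. w \<in> W \<Longrightarrow> 0 \<le> p w \<and> p w \<le> 1"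
    and sp: "(\<Sum>w\<in>W. p w) = 1" and cs: "cs = (\<Sum>w\<in>W. p w ^ k)" "0 < cs"
    and N: "1 \<le> N" and \<beta>: "0 \<le> \<beta>" "\<beta> \<le> 1" and \<delta>: "0 \<le> \<delta>" "\<delta> \<le> 1" and k: "2 \<le> k"
  defines "K \<equiv> real k * 6^k"
  shows "(\<Sum>w\<in>W. \<Sum>w'\<in>W. (N * (if w = w' then p w else 0) + N^2 * (p w * p w' * (1+\<beta>) + \<delta>))^k)
          - (N^k * cs)^2
         \<le> (N^k * cs)^2 * ((1+\<beta>)^k - 1) + K * \<delta> * (real (card W)^2 + 1) * (N^k)^2 + K * N^k * cs
           + K * N^(2*k-1) * cs * cs powr ((real k - 1) / real k)"
proof -
  obtain k' where k': "k = Suc k'" "1 \<le> k'" using k by (cases k) auto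
  define y where "y w w' = p w * p w' * (1+\<beta>) + \<delta>" for w w'
  define u where "u w w' = N * (if w = w' then p w else 0)" for w w'
  have u0: "0 \<le> u w w'" if "w \<in> W" for w w' using p that N by (auto simp: u_def)
  have y0: "0 \<le> y w w'" if "w \<in> W" "w' \<in> W" for w w' using p that \<beta> \<delta> by (auto simp: y_def)
  have N0: "0 \<le> N" using N by simp
  have S1: "(u w w' + N^2 * y w w')^k \<le> (N^2 * y w w')^k + real k * u w w' * (u w w' + N^2 * y w w')^(k-1)"
    if "w \<in> W" "w' \<in> W" for w w'
    using pow_add_le[of "u w w'" "N^2 * y w w'" k] u0[OF that(1)] y0[OF that] N0 by simp
  have S3: "y w w' ^ k \<le> (p w ^ k * p w' ^ k) * (1+\<beta>)^k + real k * \<delta> * 3^(k-1)"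
    if "w \<in> W" "w' \<in> W" for w w'
  proof -
    define v where "v = p w * p w' * (1+\<beta>)"
    have v0: "0 \<le> v" using p that \<beta> by (simp add: v_def)
    have pp1: "p w * p w' \<le> 1" using p[OF that(1)] p[OF that(2)] by (intro mult_le_one) auto
    have v2: "v \<le> 1 * 2" unfolding v_def
      using pp1 \<beta> p[OF that(1)] p[OF that(2)] by (intro mult_mono) auto
    have "y w w' ^ k = (\<delta> + v)^k" by (simp add: y_def v_def add.commute)
    also have "\<dots> \<le> v^k + real k * \<delta> * (\<delta> + v)^(k-1)" by (rule pow_add_le[OF \<delta>(1) v0])
    also have "(\<delta> + v)^(k-1) \<le> 3^(k-1)" using v0 v2 \<delta> by (intro power_mono) auto
    then have "real k * \<delta> * (\<delta> + v)^(k-1) \<le> real k * \<delta> * 3^(k-1)" using \<delta> by (intro mult_left_mono) auto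
    finally show ?thesis by (simp add: v_def power_mult_distrib)
  qed
  have sumS3: "(\<Sum>w\<in>W. \<Sum>w'\<in>W. (N^2 * y w w')^k) \<le> (N^k)^2 * ((1+\<beta>)^k * cs^2 + real k * \<delta> * 3^(k-1) * real (card W)^2)"
  proof -
    have "(\<Sum>w\<in>W. \<Sum>w'\<in>W. (N^2 * y w w')^k) = (N^k)^2 * (\<Sum>w\<in>W. \<Sum>w'\<in>W. y w w' ^ k)"
      by (simp add: power_mult_distrib sum_distrib_left power_mult[symmetric] mult.commute)
    also have "(\<Sum>w\<in>W. \<Sum>w'\<in>W. y w w' ^ k) \<le> (\<Sum>w\<in>W. \<Sum>w'\<in>W. (p w ^ k * p w' ^ k) * (1+\<beta>)^k + real k * \<delta> * 3^(k-1))"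
      using S3 by (intro sum_mono) auto
    also have "\<dots> = (1+\<beta>)^k * cs^2 + real k * \<delta> * 3^(k-1) * real (card W)^2"
      unfolding cs(1) by (simp add: sum.distrib sum_distrib_left sum_distrib_right power2_eq_square sum_product algebra_simps)
    finally show ?thesis using N0 by (simp add: mult_left_mono)
  qed
  have S2: "(\<Sum>w\<in>W. \<Sum>w'\<in>W. real k * u w w' * (u w w' + N^2 * y w w')^(k-1))
           = (\<Sum>w\<in>W. real k * N * p w * (N * p w + N^2 * y w w)^(k-1))"
  proof (rule sum.cong[OF refl])
    fix w assume w: "w \<in> W"
    have "(\<Sum>w'\<in>W. real k * u w w' * (u w w' + N^2 * y w w')^(k-1))
         = (\<Sum>w'\<in>W. if w = w' then real k * N * p w * (N * p w + N^2 * y w w)^(k-1) else 0)"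
      by (rule sum.cong[OF refl]) (auto simp: u_def)
    also have "\<dots> = real k * N * p w * (N * p w + N^2 * y w w)^(k-1)"
      using w W by (simp add: sum.delta)
    finally show "(\<Sum>w'\<in>W. real k * u w w' * (u w w' + N^2 * y w w')^(k-1))
         = real k * N * p w * (N * p w + N^2 * y w w)^(k-1)" .
  qed
  have S4: "real k * N * p w * (N * p w + N^2 * y w w)^(k-1)
      \<le> real k * 3^(k-1) * (N^k * p w^k + 2^(k-1) * N^(2*k-1) * p w^(2*k-1) + N^(2*k-1) * p w * \<delta>)"
    if w: "w \<in> W" for w
  proof -
    have p0: "0 \<le> p w" and p1: "p w \<le> 1" using p[OF w] by auto
    define A where "A = N * p w"
    define B where "B = N^2 * (2 * p w^2)"
    define C where "C = N^2 * \<delta>"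
    have A0: "0 \<le> A" and B0: "0 \<le> B" and C0: "0 \<le> C" using p0 N0 \<delta> by (auto simp: A_def B_def C_def)
    have yww: "y w w \<le> 2 * p w^2 + \<delta>"
    proof -
      have "p w * p w * (1+\<beta>) \<le> p w * p w * 2" using p0 \<beta> by (intro mult_left_mono) auto
      then show ?thesis by (simp add: y_def power2_eq_square)
    qed
    have "N * p w + N^2 * y w w \<le> A + B + C"
      using yww N0 unfolding A_def B_def C_def by (simp add: distrib_left[symmetric] mult_left_mono)
    moreover have "0 \<le> N * p w + N^2 * y w w" using y0[OF w w] p0 N0 by simp
    ultimately have "(N * p w + N^2 * y w w)^(k-1) \<le> (A + B + C)^(k-1)" by (intro power_mono)
    also have "\<dots> \<le> 3^(k-1) * (A^(k-1) + B^(k-1) + C^(k-1))" by (rule pow3_le[OF A0 B0 C0])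
    finally have I: "(N * p w + N^2 * y w w)^(k-1) \<le> 3^(k-1) * (A^(k-1) + B^(k-1) + C^(k-1))" .
    have kNp0: "0 \<le> real k * N * p w" using p0 N0 by simp
    have "real k * N * p w * (N * p w + N^2 * y w w)^(k-1)
          \<le> real k * N * p w * (3^(k-1) * (A^(k-1) + B^(k-1) + C^(k-1)))"
      using I kNp0 by (rule mult_left_mono)
    also have "\<dots> = real k * 3^(k-1) * (N * p w * A^k' + N * p w * B^k' + N * p w * C^k')"
      using k' by (simp add: algebra_simps)
    also have "N * p w * A^k' = N^k * p w^k" using k' by (simp add: A_def power_mult_distrib)
    also have "N * p w * B^k' = 2^(k-1) * N^(2*k-1) * p w^(2*k-1)"
      using k' by (simp add: B_def power_mult_distrib power_mult[symmetric] algebra_simps)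
    also have "N * p w * C^k' \<le> N^(2*k-1) * p w * \<delta>"
    proof -
      have "\<delta>^k' \<le> \<delta>" using \<delta> k'(2) by (simp add: power_le_one_iff power_decreasing[of 1 k' \<delta>, simplified])
      then have "N * p w * N^(2*k') * \<delta>^k' \<le> N * p w * N^(2*k') * \<delta>" using p0 N0 by (intro mult_left_mono) auto
      then show ?thesis using k' by (simp add: C_def power_mult_distrib power_mult[symmetric] algebra_simps)
    qed
    then have "real k * 3^(k-1) * (N^k * p w^k + 2^(k-1) * N^(2*k-1) * p w^(2*k-1) + N * p w * C^k')
      \<le> real k * 3^(k-1) * (N^k * p w^k + 2^(k-1) * N^(2*k-1) * p w^(2*k-1) + N^(2*k-1) * p w * \<delta>)"
      by (intro mult_left_mono add_left_mono) auto
    finally show ?thesis .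
  qed
  define r where "r = (real k - 1) / real k"
  have r0: "0 \<le> r" using k by (simp add: r_def)
  have S5: "(\<Sum>w\<in>W. p w^(2*k-1)) \<le> cs * cs powr r"
  proof -
    have "(\<Sum>w\<in>W. p w^(2*k-1)) = (\<Sum>w\<in>W. p w^k * p w^(k-1))"
    proof (rule sum.cong[OF refl])
      fix w have "2*k-1 = k + (k-1)" using k' by simp
      then show "p w^(2*k-1) = p w^k * p w^(k-1)" by (simp add: power_add)
    qed
    also have "\<dots> \<le> (\<Sum>w\<in>W. p w^k * cs powr r)"
    proof (rule sum_mono)
      fix w assume w: "w \<in> W"
      have p0: "0 \<le> p w" using p[OF w] by auto
      have "p w^k \<le> cs" unfolding cs(1) using W w p by (intro member_le_sum) auto
      then have "(p w^k) powr r \<le> cs powr r" using r0 p0 by (intro powr_mono2) auto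
      then have "p w^(k-1) \<le> cs powr r" using pow_powr_aux[OF p0 k] by (simp add: r_def)
      then show "p w^k * p w^(k-1) \<le> p w^k * cs powr r" using p0 by (intro mult_left_mono) auto
    qed
    also have "\<dots> = cs * cs powr r" unfolding cs(1) by (simp add: sum_distrib_right)
    finally show ?thesis .
  qed
  have k3K: "real k * 3^(k-1) \<le> K" unfolding K_def
  proof -
    have "(3::real)^(k-1) \<le> 6^(k-1)" by (intro power_mono) auto
    also have "\<dots> \<le> 6^k" by (intro power_increasing) auto
    finally show "real k * 3^(k-1) \<le> real k * 6^k" by (intro mult_left_mono) auto
  qed
  have k6K: "real k * 3^(k-1) * 2^(k-1) \<le> K" unfolding K_def
  proof -
    have "(3::real)^(k-1) * 2^(k-1) = 6^(k-1)" by (simp add: power_mult_distrib[symmetric])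
    also have "\<dots> \<le> 6^k" by (intro power_increasing) auto
    finally show "real k * 3^(k-1) * 2^(k-1) \<le> real k * 6^k" by (metis mult.assoc mult_left_mono of_nat_0_le_iff)
  qed
  have Npow: "N^(2*k-1) \<le> (N^k)^2"
    using N by (simp add: power_mult[symmetric] mult.commute power_increasing)
  have Nk0: "0 \<le> N^k" using N0 by simp
  have cs0: "0 \<le> cs" using cs by simp
  have SE: "(\<Sum>w\<in>W. real k * 3^(k-1) * (N^k * p w^k + 2^(k-1) * N^(2*k-1) * p w^(2*k-1) + N^(2*k-1) * p w * \<delta>))
      = real k * 3^(k-1) * (N^k * cs + 2^(k-1) * N^(2*k-1) * (\<Sum>w\<in>W. p w^(2*k-1)) + N^(2*k-1) * \<delta>)"
  proof -
    have a: "(\<Sum>w\<in>W. N^k * p w^k) = N^k * cs" unfolding cs(1) by (simp add: sum_distrib_left)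
    have b: "(\<Sum>w\<in>W. 2^(k-1) * N^(2*k-1) * p w^(2*k-1)) = 2^(k-1) * N^(2*k-1) * (\<Sum>w\<in>W. p w^(2*k-1))"
      by (simp add: sum_distrib_left)
    have c: "(\<Sum>w\<in>W. N^(2*k-1) * p w * \<delta>) = N^(2*k-1) * \<delta>"
    proof -
      have "(\<Sum>w\<in>W. N^(2*k-1) * p w * \<delta>) = N^(2*k-1) * \<delta> * (\<Sum>w\<in>W. p w)"
        by (simp add: sum_distrib_left sum_distrib_right mult_ac)
      then show ?thesis using sp by simp
    qed
    show ?thesis by (simp only: sum_distrib_left[symmetric] sum.distrib a b c cs(1)[symmetric])
  qed
  have SB: "(\<Sum>w\<in>W. real k * 3^(k-1) * (N^k * p w^k + 2^(k-1) * N^(2*k-1) * p w^(2*k-1) + N^(2*k-1) * p w * \<delta>))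
     \<le> real k * 3^(k-1) * (N^k * cs + 2^(k-1) * N^(2*k-1) * (cs * cs powr r) + N^(2*k-1) * \<delta>)"
    unfolding SE using S5 N0 by (intro mult_left_mono add_mono add_left_mono) auto
  have "(\<Sum>w\<in>W. \<Sum>w'\<in>W. (u w w' + N^2 * y w w')^k)
        \<le> (\<Sum>w\<in>W. \<Sum>w'\<in>W. (N^2 * y w w')^k + real k * u w w' * (u w w' + N^2 * y w w')^(k-1))"
    using S1 by (intro sum_mono) auto
  also have "\<dots> = (\<Sum>w\<in>W. \<Sum>w'\<in>W. (N^2 * y w w')^k) + (\<Sum>w\<in>W. real k * N * p w * (N * p w + N^2 * y w w)^(k-1))"
    by (simp only: sum.distrib S2)
  also have "\<dots> \<le> (N^k)^2 * ((1+\<beta>)^k * cs^2 + real k * \<delta> * 3^(k-1) * real (card W)^2)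
       + (\<Sum>w\<in>W. real k * 3^(k-1) * (N^k * p w^k + 2^(k-1) * N^(2*k-1) * p w^(2*k-1) + N^(2*k-1) * p w * \<delta>))"
    using sumS3 S4 by (intro add_mono sum_mono) auto
  also have "\<dots> \<le> (N^k)^2 * ((1+\<beta>)^k * cs^2 + real k * \<delta> * 3^(k-1) * real (card W)^2)
       + real k * 3^(k-1) * (N^k * cs + 2^(k-1) * N^(2*k-1) * (cs * cs powr r) + N^(2*k-1) * \<delta>)"
    using SB by simp
  finally have T: "(\<Sum>w\<in>W. \<Sum>w'\<in>W. (u w w' + N^2 * y w w')^k) \<le>
      (N^k)^2 * ((1+\<beta>)^k * cs^2 + real k * \<delta> * 3^(k-1) * real (card W)^2) +
      real k * 3^(k-1) * (N^k * cs + 2^(k-1) * N^(2*k-1) * (cs * cs powr r) + N^(2*k-1) * \<delta>)" .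
  have e1: "(N^k)^2 * (real k * \<delta> * 3^(k-1) * real (card W)^2) + real k * 3^(k-1) * (N^(2*k-1) * \<delta>)
        \<le> K * \<delta> * (real (card W)^2 + 1) * (N^k)^2"
  proof -
    have "real k * 3^(k-1) * (N^(2*k-1) * \<delta>) \<le> real k * 3^(k-1) * ((N^k)^2 * \<delta>)"
      using Npow \<delta> by (intro mult_left_mono mult_right_mono) auto
    then have "(N^k)^2 * (real k * \<delta> * 3^(k-1) * real (card W)^2) + real k * 3^(k-1) * (N^(2*k-1) * \<delta>)
        \<le> (real k * 3^(k-1)) * (\<delta> * (real (card W)^2 + 1) * (N^k)^2)" by (simp add: algebra_simps)
    also have "\<dots> \<le> K * (\<delta> * (real (card W)^2 + 1) * (N^k)^2)"
      using k3K \<delta> by (intro mult_right_mono) auto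
    finally show ?thesis by (simp add: mult.assoc)
  qed
  have e2: "real k * 3^(k-1) * (N^k * cs) \<le> K * N^k * cs"
  proof -
    have "(real k * 3^(k-1)) * (N^k * cs) \<le> K * (N^k * cs)" using k3K Nk0 cs0 by (intro mult_right_mono) auto
    then show ?thesis by (simp add: mult.assoc)
  qed
  have e3: "real k * 3^(k-1) * (2^(k-1) * N^(2*k-1) * (cs * cs powr r)) \<le> K * N^(2*k-1) * cs * cs powr r"
  proof -
    have "0 \<le> N^(2*k-1) * (cs * cs powr r)" using N0 cs0 by simp
    then have "(real k * 3^(k-1) * 2^(k-1)) * (N^(2*k-1) * (cs * cs powr r)) \<le> K * (N^(2*k-1) * (cs * cs powr r))"
      using k6K by (intro mult_right_mono) auto
    then show ?thesis by (simp add: algebra_simps)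
  qed
  have "(\<Sum>w\<in>W. \<Sum>w'\<in>W. (u w w' + N^2 * y w w')^k) - (N^k * cs)^2
      \<le> (N^k * cs)^2 * ((1+\<beta>)^k - 1) + K * \<delta> * (real (card W)^2 + 1) * (N^k)^2 + K * N^k * cs
           + K * N^(2*k-1) * cs * cs powr r"
  proof -
    have id1: "(N^k)^2 * ((1+\<beta>)^k * cs^2) - (N^k * cs)^2 = (N^k * cs)^2 * ((1+\<beta>)^k - 1)"
      by (simp add: algebra_simps power_mult_distrib)
    have T': "(\<Sum>w\<in>W. \<Sum>w'\<in>W. (u w w' + N^2 * y w w')^k) \<le>
      (N^k)^2 * ((1+\<beta>)^k * cs^2) + (N^k)^2 * (real k * \<delta> * 3^(k-1) * real (card W)^2) +
      real k * 3^(k-1) * (N^k * cs) + real k * 3^(k-1) * (2^(k-1) * N^(2*k-1) * (cs * cs powr r))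
      + real k * 3^(k-1) * (N^(2*k-1) * \<delta>)"
      using T by (simp only: distrib_left add.assoc)
    have id3: "K * N^(2*k-1) * cs * cs powr r = K * N^(2*k-1) * cs * cs powr r" ..
    show ?thesis using T' e1 e2 e3 id1 by linarith
  qed
  then show ?thesis by (simp add: u_def y_def r_def)
qed

lemma sum4_swap:
  "(\<Sum>a\<in>A. \<Sum>b\<in>B. \<Sum>c\<in>C. \<Sum>d\<in>D. f a b c d) = (\<Sum>c\<in>C. \<Sum>d\<in>D. \<Sum>a\<in>A. \<Sum>b\<in>B. f a b c d)"
proof -
  have "(\<Sum>a\<in>A. \<Sum>b\<in>B. \<Sum>c\<in>C. \<Sum>d\<in>D. f a b c d) = (\<Sum>a\<in>A. \<Sum>c\<in>C. \<Sum>b\<in>B. \<Sum>d\<in>D. f a b c d)"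
    by (rule sum.cong[OF refl]) (rule sum.swap)
  also have "\<dots> = (\<Sum>c\<in>C. \<Sum>a\<in>A. \<Sum>b\<in>B. \<Sum>d\<in>D. f a b c d)" by (rule sum.swap)
  also have "\<dots> = (\<Sum>c\<in>C. \<Sum>a\<in>A. \<Sum>d\<in>D. \<Sum>b\<in>B. f a b c d)"
    by (rule sum.cong[OF refl], rule sum.cong[OF refl]) (rule sum.swap)
  also have "\<dots> = (\<Sum>c\<in>C. \<Sum>d\<in>D. \<Sum>a\<in>A. \<Sum>b\<in>B. f a b c d)"
    by (rule sum.cong[OF refl]) (rule sum.swap)
  finally show ?thesis .
qed

lemma sum_prod_pairs:
  fixes G :: "nat \<Rightarrow> nat \<Rightarrow> real"
  shows "(\<Sum>t\<in>PiE {..<k} (\<lambda>_. {..<N}). \<Sum>t'\<in>PiE {..<k} (\<lambda>_. {..<N}). \<Prod>j<k. G (t j) (t' j))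
         = (\<Sum>a<N. \<Sum>b<N. G a b)^k"
proof -
  have inner: "(\<Sum>t'\<in>PiE {..<k} (\<lambda>_. {..<N}). \<Prod>j<k. G (t j) (t' j)) = (\<Prod>j<k. \<Sum>b<N. G (t j) b)" for t
    by (rule prod_sum_PiE[symmetric]) auto
  have "(\<Sum>t\<in>PiE {..<k} (\<lambda>_. {..<N}). \<Prod>j<k. \<Sum>b<N. G (t j) b) = (\<Prod>j<k. \<Sum>a<N. \<Sum>b<N. G a b)"
    by (rule prod_sum_PiE[where f="\<lambda>j a. \<Sum>b<N. G a b", symmetric]) auto
  then show ?thesis by (simp add: inner)
qed

context symk begin

definition mixup :: "nat \<Rightarrow> nat \<Rightarrow> real \<Rightarrow> real \<Rightarrow> bool" where
  "mixup m L \<beta> \<delta> \<longleftrightarrow> (\<forall>w w' d. length w = m \<longrightarrow> length w' = m \<longrightarrow> L \<le> d \<longrightarrow>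
      measure M (cyl w \<inter> shift_pre d (cyl w')) \<le> p w * p w' * (1+\<beta>) + \<delta>)"

lemma q_same:
  assumes "length w = length w'"
  shows "measure M (shift_pre a (cyl w) \<inter> shift_pre a (cyl w')) = (if w = w' then p w else 0)"
proof (cases "w = w'")
  case True then show ?thesis by (simp add: shift_pre_measure p_def)
next
  case False
  then have "shift_pre a (cyl w) \<inter> shift_pre a (cyl w') = {}"
    using cyl_Int_same_len[OF assms False] by (auto simp: shift_pre_def)
  then show ?thesis using False by simp
qed

lemma q_far:
  assumes mix: "mixup m L \<beta> \<delta>" and len: "length w = m" "length w' = m" and ab: "a + L \<le> b"
  shows "measure M (shift_pre a (cyl w) \<inter> shift_pre b (cyl w')) \<le> p w * p w' * (1+\<beta>) + \<delta>"
proof -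
  have "shift_pre a (cyl w) \<inter> shift_pre b (cyl w') = shift_pre a (cyl w \<inter> shift_pre (b - a) (cyl w'))"
    using ab by (simp add: shift_pre_Int shift_pre_add)
  then have "measure M (shift_pre a (cyl w) \<inter> shift_pre b (cyl w')) = measure M (cyl w \<inter> shift_pre (b - a) (cyl w'))"
    by (simp add: shift_pre_measure)
  also have "\<dots> \<le> p w * p w' * (1+\<beta>) + \<delta>" using mix len ab unfolding mixup_def by auto
  finally show ?thesis .
qed

definition F :: "real \<Rightarrow> real \<Rightarrow> nat \<Rightarrow> nat \<Rightarrow> 'a list \<Rightarrow> 'a list \<Rightarrow> real" where
  "F \<beta> \<delta> a b w w' = (if a = b then (if w = w' then p w else 0) else p w * p w' * (1+\<beta>) + \<delta>)"

lemma F_nonneg: "0 \<le> \<beta> \<Longrightarrow> 0 \<le> \<delta> \<Longrightarrow> 0 \<le> F \<beta> \<delta> a b w w'"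
  by (simp add: F_def p_nonneg)

lemma q_le_F:
  assumes mix: "mixup m L \<beta> \<delta>" and len: "length w = m" "length w' = m" and L: "1 \<le> L"
  shows "measure M (shift_pre (L * a) (cyl w) \<inter> shift_pre (L * b) (cyl w')) \<le> F \<beta> \<delta> a b w w'"
proof -
  consider "a = b" | "a < b" | "b < a" by linarith
  then show ?thesis
  proof cases
    case 1 then show ?thesis using len q_same[of w w' "L*a"] by (simp add: F_def)
  next
    case 2
    then have "L * a + L \<le> L * b" using L
      by (metis add.commute mult_Suc_right mult_le_mono2 Suc_leI)
    then show ?thesis using q_far[OF mix len] 2 by (simp add: F_def)
  next
    case 3
    then have "L * b + L \<le> L * a" using L
      by (metis add.commute mult_Suc_right mult_le_mono2 Suc_leI)
    then have "measure M (shift_pre (L * b) (cyl w') \<inter> shift_pre (L * a) (cyl w)) \<le> p w' * p w * (1+\<beta>) + \<delta>"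
      using q_far[OF mix len(2,1)] by simp
    then show ?thesis using 3 by (simp add: F_def Int_commute mult.commute)
  qed
qed

lemma MA_Int_bound:
  "measure X (MA pos m \<inter> MA pos' m) \<le>
    (\<Sum>w\<in>{w. length w = m}. \<Sum>w'\<in>{w. length w = m}.
       \<Prod>j<k. measure M (shift_pre (pos j) (cyl w) \<inter> shift_pre (pos' j) (cyl w')))"
proof -
  let ?W = "{w::'a list. length w = m}"
  have eq: "MA pos m \<inter> MA pos' m = (\<Union>ww\<in>?W \<times> ?W. E pos (fst ww) \<inter> E pos' (snd ww))"
    unfolding MA_def by auto
  have "measure X (MA pos m \<inter> MA pos' m) \<le> (\<Sum>ww\<in>?W \<times> ?W. measure X (E pos (fst ww) \<inter> E pos' (snd ww)))"
    unfolding eq by (rule PX.finite_measure_subadditive_finite) auto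
  also have "\<dots> = (\<Sum>ww\<in>?W \<times> ?W. \<Prod>j<k. measure M (shift_pre (pos j) (cyl (fst ww)) \<inter> shift_pre (pos' j) (cyl (snd ww))))"
  proof (rule sum.cong[OF refl])
    fix ww :: "'a list \<times> 'a list"
    have "E pos (fst ww) \<inter> E pos' (snd ww) = PiE {..<k} (\<lambda>j. shift_pre (pos j) (cyl (fst ww)) \<inter> shift_pre (pos' j) (cyl (snd ww)))"
      unfolding E_def by (rule PiE_Int)
    then show "measure X (E pos (fst ww) \<inter> E pos' (snd ww)) = (\<Prod>j<k. measure M (shift_pre (pos j) (cyl (fst ww)) \<inter> shift_pre (pos' j) (cyl (snd ww))))"
      by (simp add: PX.finite_measure_PiM_emb)
  qed
  also have "\<dots> = (\<Sum>w\<in>?W. \<Sum>w'\<in>?W. \<Prod>j<k. measure M (shift_pre (pos j) (cyl w) \<inter> shift_pre (pos' j) (cyl w')))"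
    by (simp add: sum.cartesian_product case_prod_beta)
  finally show ?thesis .
qed

lemma sumF_bound:
  assumes "0 \<le> \<beta>" "0 \<le> \<delta>"
  shows "(\<Sum>a<N. \<Sum>b<N. F \<beta> \<delta> a b w w') \<le>
     real N * (if w = w' then p w else 0) + (real N)^2 * (p w * p w' * (1+\<beta>) + \<delta>)"
proof -
  define y where "y = p w * p w' * (1+\<beta>) + \<delta>"
  define c where "c = (if w = w' then p w else 0)"
  have y0: "0 \<le> y" using assms by (simp add: y_def p_nonneg)
  have "(\<Sum>a<N. \<Sum>b<N. F \<beta> \<delta> a b w w') \<le> (\<Sum>a<N. \<Sum>b<N. (if a = b then c else 0) + y)"
    using y0 by (intro sum_mono) (auto simp: F_def c_def y_def)
  also have "\<dots> = (\<Sum>a<N. c + real N * y)"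
    by (simp add: sum.distrib sum.delta)
  also have "\<dots> = real N * c + (real N)^2 * y" by (simp add: power2_eq_square algebra_simps)
  finally show ?thesis by (simp add: c_def y_def)
qed

lemma sm_bound:
  assumes mix: "mixup m L \<beta> \<delta>" and mL: "m \<le> L" and L1: "1 \<le> L"
    and \<beta>: "0 \<le> \<beta>" "\<beta> \<le> 1" and \<delta>: "0 \<le> \<delta>" "\<delta> \<le> 1" and N: "1 \<le> N"
  defines "T \<equiv> PiE {..<k} (\<lambda>_. {..<N})" and "cs \<equiv> cyl_sum M k m" and "K \<equiv> real k * 6^k"
    and "W \<equiv> {w::'a list. length w = m}"
  shows "measure X (space X - (\<Union>t\<in>T. MA (\<lambda>j. L * t j) m)) \<le> ((1+\<beta>)^k - 1)
     + (K * \<delta> * (real (card W)^2 + 1) * (real N^k)^2 + K * real N^k * cs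
        + K * real N^(2*k-1) * cs * cs powr ((real k - 1) / real k)) / (real N^k * cs)^2"
proof -
  define \<mu> where "\<mu> = real N^k * cs"
  have csp: "0 < cs" unfolding cs_def by (rule cs_pos)
  have cardT: "card T = N^k" unfolding T_def by (simp add: card_PiE)
  have fT: "finite T" unfolding T_def by (simp add: finite_PiE)
  have mu: "\<mu> = (\<Sum>t\<in>T. measure X (MA (\<lambda>j. L * t j) m))"
    by (simp add: MA_measure cardT \<mu>_def cs_def)
  have mupos: "0 < \<mu>" unfolding \<mu>_def using csp N by simp
  have SM: "measure X (space X - (\<Union>t\<in>T. MA (\<lambda>j. L * t j) m)) \<le>
     ((\<Sum>t\<in>T. \<Sum>t'\<in>T. measure X (MA (\<lambda>j. L * t j) m \<inter> MA (\<lambda>j. L * t' j) m)) - \<mu>^2) / \<mu>^2"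
    by (rule PX.second_moment[OF fT _ mu mupos]) auto
  define Z where "Z = (\<Sum>w\<in>W. \<Sum>w'\<in>W. (real N * (if w = w' then p w else 0) + (real N)^2 * (p w * p w' * (1+\<beta>) + \<delta>))^k)"
  have Q: "(\<Sum>t\<in>T. \<Sum>t'\<in>T. measure X (MA (\<lambda>j. L * t j) m \<inter> MA (\<lambda>j. L * t' j) m)) \<le> Z"
  proof -
    have "(\<Sum>t\<in>T. \<Sum>t'\<in>T. measure X (MA (\<lambda>j. L * t j) m \<inter> MA (\<lambda>j. L * t' j) m))
       \<le> (\<Sum>t\<in>T. \<Sum>t'\<in>T. \<Sum>w\<in>W. \<Sum>w'\<in>W. \<Prod>j<k. F \<beta> \<delta> (t j) (t' j) w w')"
    proof (intro sum_mono)
      fix t t'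
      show "measure X (MA (\<lambda>j. L * t j) m \<inter> MA (\<lambda>j. L * t' j) m)
         \<le> (\<Sum>w\<in>W. \<Sum>w'\<in>W. \<Prod>j<k. F \<beta> \<delta> (t j) (t' j) w w')"
      proof (rule order.trans[OF MA_Int_bound])
        show "(\<Sum>w\<in>{w. length w = m}. \<Sum>w'\<in>{w. length w = m}. \<Prod>j<k.
            measure M (shift_pre (L * t j) (cyl w) \<inter> shift_pre (L * t' j) (cyl w')))
          \<le> (\<Sum>w\<in>W. \<Sum>w'\<in>W. \<Prod>j<k. F \<beta> \<delta> (t j) (t' j) w w')"
          unfolding W_def
          by (intro sum_mono prod_mono conjI q_le_F[OF mix _ _ L1]) auto
      qed
    qed
    also have "\<dots> = (\<Sum>w\<in>W. \<Sum>w'\<in>W. \<Sum>t\<in>T. \<Sum>t'\<in>T. \<Prod>j<k. F \<beta> \<delta> (t j) (t' j) w w')"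
      by (rule sum4_swap)
    also have "\<dots> = (\<Sum>w\<in>W. \<Sum>w'\<in>W. (\<Sum>a<N. \<Sum>b<N. F \<beta> \<delta> a b w w')^k)"
    proof (intro sum.cong[OF refl])
      fix w w'
      show "(\<Sum>t\<in>T. \<Sum>t'\<in>T. \<Prod>j<k. F \<beta> \<delta> (t j) (t' j) w w') = (\<Sum>a<N. \<Sum>b<N. F \<beta> \<delta> a b w w')^k"
        unfolding T_def using sum_prod_pairs[of "\<lambda>a b. F \<beta> \<delta> a b w w'" k N] by simp
    qed
    also have "\<dots> \<le> Z" unfolding Z_def
      using \<beta> \<delta> by (intro sum_mono power_mono sumF_bound) (auto intro!: sum_nonneg F_nonneg)
    finally show ?thesis .
  qed
  have AB: "Z - \<mu>^2 \<le> \<mu>^2 * ((1+\<beta>)^k - 1) + K * \<delta> * (real (card W)^2 + 1) * (real N^k)^2 + K * real N^k * cs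
           + K * real N^(2*k-1) * cs * cs powr ((real k - 1) / real k)"
    unfolding Z_def \<mu>_def K_def
  proof (rule alg_bound)
    show "finite W" by (simp add: W_def)
    show "\<And>w. w \<in> W \<Longrightarrow> 0 \<le> p w \<and> p w \<le> 1" by (simp add: p_nonneg p_le1)
    show "(\<Sum>w\<in>W. p w) = 1" unfolding W_def by (rule sum_p)
    show "cs = (\<Sum>w\<in>W. p w ^ k)" by (simp add: cs_def cyl_sum_def W_def p_def)
  qed (use csp N \<beta> \<delta> k2 in auto)
  have "measure X (space X - (\<Union>t\<in>T. MA (\<lambda>j. L * t j) m)) \<le> (Z - \<mu>^2) / \<mu>^2"
    using SM Q mupos by (smt (verit) divide_right_mono zero_le_power2)
  also have "\<dots> \<le> (\<mu>^2 * ((1+\<beta>)^k - 1) + (K * \<delta> * (real (card W)^2 + 1) * (real N^k)^2 + K * real N^k * cs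
           + K * real N^(2*k-1) * cs * cs powr ((real k - 1) / real k))) / \<mu>^2"
    using AB mupos by (intro divide_right_mono) auto
  also have "\<dots> = ((1+\<beta>)^k - 1) + (K * \<delta> * (real (card W)^2 + 1) * (real N^k)^2 + K * real N^k * cs
           + K * real N^(2*k-1) * cs * cs powr ((real k - 1) / real k)) / \<mu>^2"
    using mupos by (simp add: add_divide_distrib)
  finally show ?thesis by (simp add: \<mu>_def)
qed

end

lemma ev_powr_ge:
  assumes "0 < e"
  shows "eventually (\<lambda>n::nat. K \<le> real n powr e) sequentially"
proof -
  define K' where "K' = max 1 K"
  have K'1: "1 \<le> K'" by (simp add: K'_def)
  obtain N0 :: nat where N0: "K' powr (1/e) \<le> real N0" using real_arch_simple by blast
  show ?thesis unfolding eventually_sequentially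
  proof (intro exI[of _ N0] allI impI)
    fix n assume "N0 \<le> n"
    then have "K' powr (1/e) \<le> real n" using N0 by linarith
    then have "(K' powr (1/e)) powr e \<le> real n powr e" using assms K'1 by (intro powr_mono2) auto
    moreover have "(K' powr (1/e)) powr e = K'" using assms K'1 by (simp add: powr_powr)
    ultimately show "K \<le> real n powr e" unfolding K'_def by linarith
  qed
qed

lemma ev_ln_ge: "eventually (\<lambda>n::nat. Z \<le> ln (real n)) sequentially"
proof -
  have "filterlim (\<lambda>n::nat. ln (real n)) at_top sequentially"
    by (rule filterlim_compose[OF ln_at_top filterlim_real_sequentially])
  then show ?thesis unfolding filterlim_at_top by blast
qed

lemma P1:
  fixes \<beta> x :: real
  assumes "0 \<le> \<beta>" "\<beta> \<le> 1" "\<beta> \<le> x powr (-b)" "1 \<le> x" "\<gamma> \<le> b"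
  shows "(1+\<beta>)^k - 1 \<le> real k * 2^k * x powr (-\<gamma>)"
proof -
  have "(\<beta>+1)^k \<le> 1^k + real k * \<beta> * (\<beta>+1)^(k-1)" by (rule pow_add_le) (use assms in auto)
  also have "(\<beta>+1)^(k-1) \<le> 2^(k-1)" using assms by (intro power_mono) auto
  then have "real k * \<beta> * (\<beta>+1)^(k-1) \<le> real k * \<beta> * 2^(k-1)" using assms by (intro mult_left_mono) auto
  finally have a: "(1+\<beta>)^k - 1 \<le> real k * \<beta> * 2^(k-1)" by (simp add: add.commute)
  have "\<beta> \<le> x powr (-\<gamma>)" using assms by (meson order.trans powr_mono neg_le_iff_le)
  moreover have "(2::real)^(k-1) \<le> 2^k" by (intro power_increasing) auto
  ultimately have "real k * \<beta> * 2^(k-1) \<le> real k * x powr (-\<gamma>) * 2^k"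
    using assms by (intro mult_mono) auto
  then show ?thesis using a by (simp add: mult_ac)
qed

lemma P2:
  fixes x \<delta> Wc cs K C q s R Nk \<gamma> :: real
  assumes x: "1 \<le> x" and \<delta>: "0 \<le> \<delta>" "\<delta> \<le> C * x powr (-R)" and R: "R = 2 * q + 2 * s + 1"
    and Wc: "0 \<le> Wc" "Wc \<le> x powr q" and q: "0 \<le> q" and cs: "x powr (-s) \<le> cs" "0 < cs"
    and K: "0 \<le> K" and C: "0 \<le> C" and Nk: "0 < Nk" and \<gamma>: "\<gamma> \<le> 1"
  shows "K * \<delta> * (Wc^2 + 1) * Nk^2 / (Nk * cs)^2 \<le> 2 * K * C * x powr (-\<gamma>)"
proof -
  have x0: "0 < x" using x by simp
  have w: "Wc^2 + 1 \<le> 2 * x powr (2*q)"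
  proof -
    have "Wc^2 \<le> (x powr q)^2" using Wc by (intro power_mono) auto
    also have "\<dots> = x powr (2*q)" by (simp add: power2_eq_square powr_add[symmetric])
    finally have "Wc^2 \<le> x powr (2*q)" .
    moreover have "1 \<le> x powr (2*q)" using x q by (simp add: ge_one_powr_ge_zero)
    ultimately show ?thesis by simp
  qed
  have c: "1 / cs^2 \<le> x powr (2* s)"
  proof -
    have "(x powr (-s))^2 \<le> cs^2" using cs x0 by (intro power_mono) auto
    moreover have "(x powr (-s))^2 = x powr (-(2* s))"
      by (simp add: power2_eq_square powr_add[symmetric])
    ultimately have "x powr (-(2* s)) \<le> cs^2" by simp
    then have "1 / cs^2 \<le> 1 / x powr (-(2* s))" using x0 cs by (intro divide_left_mono) (auto intro!: mult_pos_pos)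
    then show ?thesis by (simp add: powr_minus_divide)
  qed
  have "K * \<delta> * (Wc^2 + 1) * Nk^2 / (Nk * cs)^2 = K * \<delta> * (Wc^2 + 1) * (1 / cs^2)"
    using Nk cs by (simp add: field_simps power_mult_distrib)
  also have "\<dots> \<le> K * (C * x powr (-R)) * (2 * x powr (2*q)) * x powr (2* s)"
    using \<delta> w c K C Wc by (intro mult_mono mult_left_mono) auto
  also have "\<dots> = 2 * K * C * (x powr (-R) * x powr (2*q) * x powr (2* s))" by (simp add: mult_ac)
  also have "x powr (-R) * x powr (2*q) * x powr (2* s) = x powr (-1)"
    by (simp add: powr_add[symmetric] R)
  also have "x powr (-1) \<le> x powr (-\<gamma>)" using x \<gamma> by (intro powr_mono) auto
  then have "2 * K * C * x powr (-1) \<le> 2 * K * C * x powr (-\<gamma>)" using K C by (intro mult_left_mono) auto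
  finally show ?thesis .
qed

lemma P3:
  fixes x cs K Nn s e \<gamma> :: real
  assumes x: "1 \<le> x" and cs: "x powr (-s) \<le> cs" "0 < cs" and K: "0 \<le> K"
    and Nn: "x powr (1 - e) / 6 \<le> Nn" and e: "e < 1" and g: "\<gamma> \<le> real k * (1 - e) - s"
  shows "K * Nn^k * cs / (Nn^k * cs)^2 \<le> K * 6^k * x powr (-\<gamma>)"
proof -
  have x0: "0 < x" using x by simp
  have Np: "0 < x powr (1 - e) / 6" using x0 by simp
  have Nn0: "0 < Nn" using Np Nn by linarith
  have "(x powr (1 - e) / 6)^k \<le> Nn^k" using Np Nn by (intro power_mono) auto
  moreover have "(x powr (1 - e) / 6)^k = x powr (real k * (1 - e)) / 6^k"
    using x0 by (simp add: power_divide powr_realpow[symmetric] powr_powr mult.commute)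
  ultimately have a: "x powr (real k * (1 - e)) / 6^k \<le> Nn^k" by simp
  have "x powr (real k * (1 - e)) / 6^k * x powr (-s) \<le> Nn^k * cs"
    using a cs x0 Nn0 by (intro mult_mono) auto
  moreover have "x powr (real k * (1 - e)) / 6^k * x powr (-s) = x powr (real k * (1 - e) - s) / 6^k"
    by (simp add: powr_add[symmetric])
  ultimately have b: "x powr (real k * (1 - e) - s) / 6^k \<le> Nn^k * cs" by simp
  have "K * Nn^k * cs / (Nn^k * cs)^2 = K / (Nn^k * cs)"
    using Nn0 cs by (simp add: power2_eq_square field_simps)
  also have "\<dots> \<le> K / (x powr (real k * (1 - e) - s) / 6^k)"
    using b K x0 cs Nn0 by (intro divide_left_mono) auto
  also have "\<dots> = K * 6^k * x powr (-(real k * (1 - e) - s))"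
    by (simp only: powr_minus_divide) simp
  also have "x powr (-(real k * (1 - e) - s)) \<le> x powr (-\<gamma>)" using x g by (intro powr_mono) auto
  then have "K * 6^k * x powr (-(real k * (1 - e) - s)) \<le> K * 6^k * x powr (-\<gamma>)"
    using K by (intro mult_left_mono) auto
  finally show ?thesis .
qed

lemma P4:
  fixes x cs K Nn s e \<gamma> :: real
  assumes x: "1 \<le> x" and cs: "x powr (-s) \<le> cs" "0 < cs" and K: "0 \<le> K" and k: "1 \<le> k"
    and Nn: "x powr (1 - e) / 6 \<le> Nn" and g: "\<gamma> \<le> 1 - e - s / real k" and s: "0 \<le> s"
  shows "K * Nn^(2*k-1) * cs * cs powr ((real k - 1) / real k) / (Nn^k * cs)^2 \<le> 6 * K * x powr (-\<gamma>)"
proof -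
  have x0: "0 < x" using x by simp
  have Np: "0 < x powr (1 - e) / 6" using x0 by simp
  have Nn0: "0 < Nn" using Np Nn by linarith
  have kk: "2*k-1 + 1 = 2 * k" using k by simp
  have r: "cs powr ((real k - 1) / real k) = cs / cs powr (1 / real k)"
  proof -
    have "(real k - 1) / real k = 1 - 1 / real k" using k by (simp add: field_simps)
    then show ?thesis using cs by (simp add: powr_diff)
  qed
  have "K * Nn^(2*k-1) * cs * cs powr ((real k - 1) / real k) / (Nn^k * cs)^2
        = K * (Nn^(2*k-1) * Nn) * cs^2 / (Nn * (Nn^k)^2 * cs^2 * cs powr (1 / real k))"
    using Nn0 cs by (simp add: r power2_eq_square field_simps)
  also have "Nn^(2*k-1) * Nn = (Nn^k)^2" using kk by (metis power_Suc2 Suc_eq_plus1 power_mult mult.commute)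
  also have "K * (Nn^k)^2 * cs^2 / (Nn * (Nn^k)^2 * cs^2 * cs powr (1 / real k)) = K / (Nn * cs powr (1 / real k))"
    using Nn0 cs by (simp add: field_simps)
  also have "\<dots> \<le> K / (x powr (1 - e) / 6 * x powr (- s / real k))"
  proof (intro divide_left_mono mult_mono K)
    show "x powr (- s / real k) \<le> cs powr (1 / real k)"
    proof -
      have "(x powr (-s)) powr (1 / real k) \<le> cs powr (1 / real k)" using cs x0 by (intro powr_mono2) auto
      then show ?thesis by (simp add: powr_powr)
    qed
  qed (use Nn Nn0 x0 cs in \<open>auto intro!: mult_pos_pos\<close>)
  also have "\<dots> = 6 * K * x powr (-(1 - e - s / real k))"
  proof -
    have eqexp: "(1 - e) + (- s / real k) = 1 - e - s / real k" by simp
    have "x powr (1 - e) * x powr (- s / real k) = x powr ((1 - e) + (- s / real k))"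
      by (rule powr_add[symmetric])
    then have "x powr (1 - e) * x powr (- s / real k) = x powr (1 - e - s / real k)"
      by (simp only: eqexp)
    then have "x powr (1 - e) / 6 * x powr (- s / real k) = x powr (1 - e - s / real k) / 6"
      by simp
    then show ?thesis by (simp only: powr_minus_divide) simp
  qed
  also have "x powr (-(1 - e - s / real k)) \<le> x powr (-\<gamma>)" using x g by (intro powr_mono) auto
  then have "6 * K * x powr (-(1 - e - s / real k)) \<le> 6 * K * x powr (-\<gamma>)"
    using K by (intro mult_left_mono) auto
  finally show ?thesis .
qed

definition mmf :: "real \<Rightarrow> nat \<Rightarrow> nat" where "mmf c n = nat \<lfloor>c * ln (real n)\<rfloor>"
definition ggf :: "real \<Rightarrow> nat \<Rightarrow> nat" where "ggf e n = nat \<lceil>real n powr e\<rceil>"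
definition LLf :: "real \<Rightarrow> real \<Rightarrow> nat \<Rightarrow> nat" where "LLf c e n = mmf c n + ggf e n"
definition NNf :: "real \<Rightarrow> real \<Rightarrow> nat \<Rightarrow> nat" where "NNf c e n = n div LLf c e n"

context symk begin

definition badset :: "real \<Rightarrow> real \<Rightarrow> nat \<Rightarrow> (nat \<Rightarrow> nat \<Rightarrow> 'a) set" where
  "badset c e n = space X - (\<Union>t\<in>PiE {..<k} (\<lambda>_. {..<NNf c e n}). MA (\<lambda>j. LLf c e n * t j) (mmf c n))"

lemma bad_bound_point:
  fixes \<beta> \<delta> :: "nat \<Rightarrow> real"
  assumes mix: "\<forall>m g. 1 \<le> g \<longrightarrow> mixup m (m+g) (\<beta> g) (\<delta> g)"
    and bd: "\<forall>g\<ge>1. 0 \<le> \<beta> g \<and> \<beta> g \<le> real g powr (-a) \<and> 0 \<le> \<delta> g \<and> \<delta> g \<le> C * \<theta>^g"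
    and a: "0 < a" and C: "0 \<le> C" and \<theta>: "0 < \<theta>" "\<theta> < 1" and c: "0 < c"
    and s: "0 < s" "s < real k" "s = c * (real k - 1) * H''" and e: "e = (1 - s / real k) / 2"
    and H'': "0 < H''"
    and m0: "\<And>mm. mm \<ge> m0 \<Longrightarrow> exp (- (real k - 1) * real mm * H'') \<le> cyl_sum M k mm"
    and q: "q = c * ln (real CARD('a))" and R: "R = 2 * q + 2 * s + 1"
    and \<gamma>: "\<gamma> = min (a * e) e"
    and n2: "2 \<le> n"
    and h2: "real m0 + 1 \<le> c * ln (real n)"
    and h3: "c * ln (real n) \<le> real n powr e"
    and h4: "6 \<le> real n powr (1 - e)"
    and h5: "R * ln (real n) \<le> - ln \<theta> * real n powr e"
    and h6: "C \<le> real n powr R"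
  shows "measure X (badset c e n) \<le>
     (real k * 2^k + 2 * (real k * 6^k) * C + (real k * 6^k) * 6^k + 6 * (real k * 6^k)) * real n powr (-\<gamma>)"
proof -
  define x where "x = real n"
  have x1: "1 \<le> x" and x0: "0 < x" using n2 by (auto simp: x_def)
  have lnx: "0 < ln x" using n2 by (simp add: x_def)
  have sk: "0 < s / real k" "s / real k < 1" using s by (auto simp: divide_less_eq)
  have e0: "0 < e" unfolding e using sk by simp
  have e1: "e < 1/2" unfolding e using sk s(1) k2 by simp
  define m where "m = mmf c n"
  define g where "g = ggf e n"
  define L where "L = LLf c e n"
  define N where "N = NNf c e n"
  define cs where "cs = cyl_sum M k m"
  define K where "K = real k * 6^k"
  have K0: "0 \<le> K" by (simp add: K_def)
  have m_le: "real m \<le> c * ln x" unfolding m_def mmf_def x_def using c lnx x_def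
    by (intro of_nat_floor) (simp add: x_def)
  have m_ge: "c * ln x - 1 \<le> real m" unfolding m_def mmf_def x_def by linarith
  have mm0: "m0 \<le> m" using h2 m_ge unfolding x_def by linarith
  have xe1: "1 \<le> x powr e" using x1 e0 by (simp add: ge_one_powr_ge_zero)
  have g_ge: "x powr e \<le> real g" unfolding g_def ggf_def x_def by (rule real_nat_ceiling_ge)
  have g_le: "real g \<le> x powr e + 1"
  proof -
    have "0 \<le> x powr e" by simp
    then show ?thesis unfolding g_def ggf_def x_def by linarith
  qed
  have g1: "1 \<le> g" using g_ge xe1 by linarith
  have L_def': "L = m + g" by (simp add: L_def LLf_def m_def g_def)
  have L1: "1 \<le> L" using g1 L_def' by simp
  have L_le: "real L \<le> 3 * x powr e"
    using L_def' m_le g_le h3 xe1 unfolding x_def by simp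
  have N_def': "N = n div L" by (simp add: N_def NNf_def L_def)
  have N_gt: "x / real L - 1 < real N"
  proof -
    have "n < (n div L + 1) * L" using L1 by (metis add.commute div_mult_mod_eq mod_less_divisor mult.commute mult_Suc nat_add_left_cancel_less le_less_trans less_le_trans plus_1_eq_Suc zero_less_one le_refl less_or_eq_imp_le not_le)
    then have "x < (real N + 1) * real L" unfolding x_def N_def' by (metis of_nat_add of_nat_less_iff of_nat_mult of_nat_1)
    then show ?thesis using L1 by (simp add: field_simps)
  qed
  have xe0: "0 < x powr e" using x0 by simp
  have "x / (3 * x powr e) \<le> x / real L" using L_le L1 x0 by (intro divide_left_mono) auto
  moreover have "x / (3 * x powr e) = x powr (1 - e) / 3"
    using x0 by (simp add: powr_diff)
  ultimately have N_ge: "x powr (1 - e) / 6 \<le> real N" using N_gt h4 unfolding x_def by linarith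
  have N1: "1 \<le> N" using N_ge h4 unfolding x_def by linarith
  have bdg: "0 \<le> \<beta> g" "\<beta> g \<le> real g powr (-a)" "0 \<le> \<delta> g" "\<delta> g \<le> C * \<theta>^g" using bd g1 by auto
  have \<beta>_le: "\<beta> g \<le> x powr (-(a*e))"
  proof -
    have "real g powr (-a) \<le> (x powr e) powr (-a)" using a xe0 g_ge by (intro powr_mono2') auto
    also have "\<dots> = x powr (-(a*e))" by (simp add: powr_powr mult.commute)
    finally show ?thesis using bdg by linarith
  qed
  have \<beta>_1: "\<beta> g \<le> 1"
  proof -
    have "real g powr (-a) \<le> real g powr 0" using g1 a by (intro powr_mono) auto
    then show ?thesis using bdg g1 by simp
  qed
  have \<theta>g: "\<theta>^g \<le> x powr (-R)"
  proof -
    have lt: "ln \<theta> < 0" using \<theta> by simp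
    have "\<theta>^g = exp (real g * ln \<theta>)" using \<theta> by (simp add: exp_of_nat_mult)
    also have "real g * ln \<theta> \<le> x powr e * ln \<theta>" using g_ge lt by (intro mult_right_mono_neg) auto
    also have "x powr e * ln \<theta> \<le> - R * ln x" using h5 unfolding x_def by (simp add: algebra_simps)
    also have "exp (- R * ln x) = x powr (-R)" using x0 by (simp add: powr_def)
    finally show ?thesis by simp
  qed
  have \<delta>_le: "\<delta> g \<le> C * x powr (-R)"
    using bdg(4) \<theta>g C by (meson order.trans mult_left_mono)
  have \<delta>_1: "\<delta> g \<le> 1"
  proof -
    have "C * x powr (-R) \<le> x powr R * x powr (-R)" using h6 unfolding x_def by (intro mult_right_mono) auto
    also have "\<dots> = 1" using x0 by (simp add: powr_add[symmetric])
    finally show ?thesis using \<delta>_le by linarith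
  qed
  have cs_ge: "x powr (-s) \<le> cs"
  proof -
    have "exp (- (real k - 1) * real m * H'') \<le> cs" unfolding cs_def by (rule m0[OF mm0])
    moreover have "(real k - 1) * real m * H'' \<le> (real k - 1) * (c * ln x) * H''"
      using m_le k2 H'' by (intro mult_right_mono mult_left_mono) auto
    then have "- (real k - 1) * (c * ln x) * H'' \<le> - (real k - 1) * real m * H''" by (simp only: mult_minus_left neg_le_iff_le)
    then have "exp (- (real k - 1) * (c * ln x) * H'') \<le> exp (- (real k - 1) * real m * H'')" by (simp only: exp_le_cancel_iff)
    moreover have "exp (- (real k - 1) * (c * ln x) * H'') = x powr (-s)"
    proof -
      have "- (real k - 1) * (c * ln x) * H'' = (-s) * ln x" unfolding s(3) by (simp add: algebra_simps)
      then show ?thesis using x0 by (simp add: powr_def)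
    qed
    ultimately show ?thesis by linarith
  qed
  have cs0: "0 < cs" unfolding cs_def by (rule cs_pos)
  define W where "W = {w::'a list. length w = m}"
  have Wc: "real (card W) \<le> x powr q"
  proof -
    have Cp: "0 < real CARD('a)" by simp
    have "real (card W) = real CARD('a) ^ m" unfolding W_def by (simp add: card_words)
    also have "\<dots> = exp (real m * ln (real CARD('a)))" using Cp by (simp add: exp_of_nat_mult)
    also have "real m * ln (real CARD('a)) \<le> (c * ln x) * ln (real CARD('a))"
      using m_le by (intro mult_right_mono) auto
    also have "exp ((c * ln x) * ln (real CARD('a))) = x powr q" using x0 q by (simp add: powr_def algebra_simps)
    finally show ?thesis by simp
  qed
  have q0: "0 \<le> q" using q c by simp
  have mixL: "mixup m L (\<beta> g) (\<delta> g)" using mix g1 L_def' by auto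
  have SMB: "measure X (space X - (\<Union>t\<in>PiE {..<k} (\<lambda>_. {..<N}). MA (\<lambda>j. L * t j) m)) \<le> ((1+\<beta> g)^k - 1)
     + (K * \<delta> g * (real (card W)^2 + 1) * (real N^k)^2 + K * real N^k * cs
        + K * real N^(2*k-1) * cs * cs powr ((real k - 1) / real k)) / (real N^k * cs)^2"
    unfolding K_def cs_def W_def
    by (rule sm_bound[OF mixL _ L1 bdg(1) \<beta>_1 bdg(3) \<delta>_1 N1]) (simp add: L_def')
  have bad_eq: "badset c e n = space X - (\<Union>t\<in>PiE {..<k} (\<lambda>_. {..<N}). MA (\<lambda>j. L * t j) m)"
    by (simp add: badset_def L_def N_def m_def)
  have ke: "real k * e = (real k - s) / 2" unfolding e using k2 by (simp add: field_simps)
  have \<gamma>e: "\<gamma> \<le> e" "\<gamma> \<le> a * e" using \<gamma> by auto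
  have T1: "(1+\<beta> g)^k - 1 \<le> real k * 2^k * x powr (-\<gamma>)"
    by (rule P1[OF bdg(1) \<beta>_1 \<beta>_le x1 \<gamma>e(2)])
  have Nk0: "0 < real N^k" using N1 by simp
  have T2: "K * \<delta> g * (real (card W)^2 + 1) * (real N^k)^2 / (real N^k * cs)^2 \<le> 2 * K * C * x powr (-\<gamma>)"
    by (rule P2[OF x1 bdg(3) \<delta>_le R _ Wc q0 cs_ge cs0 K0 C Nk0]) (use \<gamma>e e1 in auto)
  have T3: "K * real N^k * cs / (real N^k * cs)^2 \<le> K * 6^k * x powr (-\<gamma>)"
  proof (rule P3[OF x1 cs_ge cs0 K0 N_ge])
    show "e < 1" using e1 by simp
    have "real k * (1 - e) - s = real k * e" using ke by (simp add: algebra_simps)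
    moreover have "e \<le> real k * e" using k2 e0 by (simp add: mult_le_cancel_right1)
    ultimately show "\<gamma> \<le> real k * (1 - e) - s" using \<gamma>e by linarith
  qed
  have T4: "K * real N^(2*k-1) * cs * cs powr ((real k - 1) / real k) / (real N^k * cs)^2 \<le> 6 * K * x powr (-\<gamma>)"
  proof (rule P4[OF x1 cs_ge cs0 K0 _ N_ge])
    show "1 \<le> k" using k2 by simp
    show "0 \<le> s" using s by simp
    have "1 - e - s / real k = e" unfolding e by (simp add: field_simps)
    then show "\<gamma> \<le> 1 - e - s / real k" using \<gamma>e by simp
  qed
  have "measure X (badset c e n) \<le> ((1+\<beta> g)^k - 1)
     + (K * \<delta> g * (real (card W)^2 + 1) * (real N^k)^2 / (real N^k * cs)^2 + K * real N^k * cs / (real N^k * cs)^2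
        + K * real N^(2*k-1) * cs * cs powr ((real k - 1) / real k) / (real N^k * cs)^2)"
    using SMB unfolding bad_eq by (simp only: add_divide_distrib)
  also have "\<dots> \<le> real k * 2^k * x powr (-\<gamma>) + (2 * K * C * x powr (-\<gamma>) + K * 6^k * x powr (-\<gamma>) + 6 * K * x powr (-\<gamma>))"
    by (intro add_mono T1 T2 T3 T4)
  also have "\<dots> = (real k * 2^k + 2 * K * C + K * 6^k + 6 * K) * x powr (-\<gamma>)" by (simp only: distrib_right add.assoc)
  finally show ?thesis by (simp only: K_def x_def)
qed

end

context symk begin

lemma badset_sets: "badset c e n \<in> sets X"
  unfolding badset_def by (intro sets.Diff sets.top sets.finite_UN) (auto simp: finite_PiE)

lemma good_match:
  assumes "x \<in> space X" "x \<notin> badset c e n"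
  shows "mmf c n \<le> match_len k x n"
proof -
  obtain t where t: "t \<in> PiE {..<k} (\<lambda>_. {..<NNf c e n})" "x \<in> MA (\<lambda>j. LLf c e n * t j) (mmf c n)"
    using assms unfolding badset_def by auto
  have "LLf c e n * t j + mmf c n \<le> n" if "j < k" for j
  proof -
    have "t j < NNf c e n" using t(1) that by auto
    then have "t j + 1 \<le> n div LLf c e n" by (simp add: NNf_def)
    then have "LLf c e n * (t j + 1) \<le> LLf c e n * (n div LLf c e n)" by (rule mult_le_mono2)
    also have "\<dots> \<le> n" by (simp add: mult.commute)
    finally have "LLf c e n * t j + LLf c e n \<le> n" by (simp add: algebra_simps)
    moreover have "mmf c n \<le> LLf c e n" by (simp add: LLf_def)
    ultimately show ?thesis by linarith
  qed
  then show ?thesis using lower_event[OF assms(1) t(2)] by blast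
qed

lemma lower_c:
  fixes \<beta> \<delta> :: "nat \<Rightarrow> real"
  assumes mix: "\<forall>m g. 1 \<le> g \<longrightarrow> mixup m (m+g) (\<beta> g) (\<delta> g)"
    and bd: "\<forall>g\<ge>1. 0 \<le> \<beta> g \<and> \<beta> g \<le> real g powr (-a) \<and> 0 \<le> \<delta> g \<and> \<delta> g \<le> C * \<theta>^g"
    and a: "0 < a" and C: "0 \<le> C" and \<theta>: "0 < \<theta>" "\<theta> < 1" and c: "0 < c"
    and H'': "0 < H''" and HU: "renyi_upper M k < ereal H''" and cH: "c * (real k - 1) * H'' < real k"
  shows "AE x in X. ereal c \<le> liminf (\<lambda>n. ereal (real (match_len k x n) / ln (real n)))"
proof -
  define s where "s = c * (real k - 1) * H''"
  have s0: "0 < s" unfolding s_def using c H'' k2 by simp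
  have sk: "s < real k" using cH by (simp add: s_def)
  define e where "e = (1 - s / real k) / 2"
  have skk: "0 < s / real k" "s / real k < 1" using s0 sk by (auto simp: divide_less_eq)
  have e0: "0 < e" unfolding e_def using skk by simp
  have e2: "0 < e/2" using e0 by simp
  define q where "q = c * ln (real CARD('a))"
  have q0: "0 \<le> q" using c by (simp add: q_def)
  define R where "R = 2 * q + 2 * s + 1"
  have R0: "0 < R" using q0 s0 by (simp add: R_def)
  define \<gamma> where "\<gamma> = min (a * e) e"
  have \<gamma>0: "0 < \<gamma>" using a e0 by (simp add: \<gamma>_def)
  define D where "D = (real k * 2^k + 2 * (real k * 6^k) * C + (real k * 6^k) * 6^k + 6 * (real k * 6^k))"
  obtain m0 where m0: "\<And>mm. mm \<ge> m0 \<Longrightarrow> exp (- (real k - 1) * real mm * H'') \<le> cyl_sum M k mm"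
    using cs_lower_ev[OF HU] unfolding eventually_sequentially by blast
  have lt: "0 < - ln \<theta>" using \<theta> by simp
  have ev2: "eventually (\<lambda>n::nat. 2 \<le> n) sequentially" by (rule eventually_ge_at_top)
  have evh2: "eventually (\<lambda>n::nat. real m0 + 1 \<le> c * ln (real n)) sequentially"
    using ev_ln_ge[of "(real m0 + 1) / c"] c by (auto elim!: eventually_mono simp: field_simps)
  have evh3: "eventually (\<lambda>n::nat. c * ln (real n) \<le> real n powr e) sequentially"
    using ev_powr_ge[OF e2, of "2 * c / e"] ev2
  proof eventually_elim
    case (elim n)
    have n1: "1 \<le> real n" using elim by simp
    have "ln (real n) \<le> real n powr (e/2) / (e/2)" by (rule ln_powr_bound[OF n1]) (use e0 in simp)
    then have "c * ln (real n) \<le> c * (real n powr (e/2) / (e/2))" using c by (intro mult_left_mono) auto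
    also have "\<dots> = (2 * c / e) * real n powr (e/2)" by (simp add: field_simps)
    also have "\<dots> \<le> real n powr (e/2) * real n powr (e/2)" using elim by (intro mult_right_mono) auto
    also have "\<dots> = real n powr e" by (simp add: powr_add[symmetric])
    finally show ?case .
  qed
  have evh4: "eventually (\<lambda>n::nat. 6 \<le> real n powr (1 - e)) sequentially"
    by (rule ev_powr_ge) (use skk in \<open>simp add: e_def\<close>)
  have evh5: "eventually (\<lambda>n::nat. R * ln (real n) \<le> - ln \<theta> * real n powr e) sequentially"
    using ev_powr_ge[OF e2, of "2 * R / (e * (- ln \<theta>))"] ev2
  proof eventually_elim
    case (elim n)
    have n1: "1 \<le> real n" using elim by simp
    have "ln (real n) \<le> real n powr (e/2) / (e/2)" by (rule ln_powr_bound[OF n1]) (use e0 in simp)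
    then have "R * ln (real n) \<le> R * (real n powr (e/2) / (e/2))" using R0 by (intro mult_left_mono) auto
    also have "\<dots> = (- ln \<theta>) * ((2 * R / (e * (- ln \<theta>))) * real n powr (e/2))" using lt e0 by (simp add: field_simps)
    also have "\<dots> \<le> (- ln \<theta>) * (real n powr (e/2) * real n powr (e/2))"
      using elim lt by (intro mult_left_mono mult_right_mono) auto
    also have "\<dots> = - ln \<theta> * real n powr e" by (simp add: powr_add[symmetric])
    finally show ?case .
  qed
  have evh6: "eventually (\<lambda>n::nat. C \<le> real n powr R) sequentially" by (rule ev_powr_ge[OF R0])
  have EV: "eventually (\<lambda>n. measure X (badset c e n) \<le> D * real n powr (-\<gamma>)) sequentially"
    using ev2 evh2 evh3 evh4 evh5 evh6
  proof eventually_elim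
    case (elim n)
    show ?case unfolding D_def
      by (rule bad_bound_point[OF mix bd a C \<theta> c s0 sk s_def e_def H'' m0 q_def R_def \<gamma>_def elim])
  qed
  then obtain n0 where n0: "\<And>n. n \<ge> n0 \<Longrightarrow> measure X (badset c e n) \<le> D * real n powr (-\<gamma>)"
    unfolding eventually_sequentially by blast
  define \<rho> where "\<rho> = 2 powr (-\<gamma>)"
  have \<rho>: "0 < \<rho>" "\<rho> < 1" using \<gamma>0 by (auto simp: \<rho>_def intro!: powr_less_one)
  have pw: "real (2^l) powr (-\<gamma>) = \<rho>^l" for l :: nat
  proof -
    have "real (2^l) powr (-\<gamma>) = (2 powr real l) powr (-\<gamma>)" by (simp add: powr_realpow)
    also have "\<dots> = (2 powr (-\<gamma>)) powr real l" by (simp add: powr_powr mult.commute)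
    also have "\<dots> = \<rho>^l" using \<rho> by (simp add: \<rho>_def powr_realpow)
    finally show ?thesis .
  qed
  have summ: "summable (\<lambda>l. measure X (badset c e (2^l)))"
  proof (rule summable_comparison_test_ev)
    show "eventually (\<lambda>l. norm (measure X (badset c e (2^l))) \<le> D * \<rho>^l) sequentially"
      unfolding eventually_sequentially
    proof (intro exI[of _ n0] allI impI)
      fix l assume "n0 \<le> l"
      moreover have "l \<le> 2^l" using less_exp[of l] by simp
      ultimately have "n0 \<le> 2^l" by linarith
      then show "norm (measure X (badset c e (2^l))) \<le> D * \<rho>^l" using n0[of "2^l"] pw[of l] by simp
    qed
    show "summable (\<lambda>l. D * \<rho>^l)" using \<rho> by (intro summable_mult summable_geometric) auto
  qed
  have "AE x in X. eventually (\<lambda>l. x \<in> space X - badset c e (2^l)) sequentially"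
    by (rule borel_cantelli_AE1[OF badset_sets _ summ]) (simp add: less_top[symmetric])
  then show ?thesis
  proof (rule AE_mp[OF _ AE_I2[OF impI]])
    fix x assume xs: "x \<in> space X" and ev: "eventually (\<lambda>l. x \<in> space X - badset c e (2^l)) sequentially"
    obtain L0 where L0: "\<And>l. l \<ge> L0 \<Longrightarrow> x \<notin> badset c e (2^l)" using ev unfolding eventually_sequentially by blast
    have ML2: "c * (real l * ln 2) - 1 \<le> real (match_len k x (2^l))" if "l \<ge> L0" for l
    proof -
      have "mmf c (2^l) \<le> match_len k x (2^l)" by (rule good_match[OF xs L0[OF that]])
      moreover have "c * ln (real (2^l::nat)) - 1 \<le> real (mmf c (2^l))" unfolding mmf_def by linarith
      moreover have "ln (real (2^l::nat)) = real l * ln 2" by (simp add: ln_realpow)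
      ultimately show ?thesis by simp
    qed
    show "ereal c \<le> liminf (\<lambda>n. ereal (real (match_len k x n) / ln (real n)))"
    proof (rule liminf_from_bound[where K="c * ln 2 + 1"])
      show "eventually (\<lambda>n. c - (c * ln 2 + 1) / ln (real n) \<le> real (match_len k x n) / ln (real n)) sequentially"
        unfolding eventually_sequentially
      proof (intro exI[of _ "max (2^L0) 2"] allI impI)
        fix n :: nat assume n: "max (2^L0) 2 \<le> n"
        then obtain l where l: "2^l \<le> n" "n < 2^(l+1)" using dyadic_block[of n] by auto
        have "L0 \<le> l"
        proof (rule ccontr)
          assume "\<not> L0 \<le> l"
          then have "(2::nat)^(l+1) \<le> 2^L0" by (intro power_increasing) auto
          then show False using l n by simp
        qed
        have np: "0 < real n" using n by simp
        have lnp: "0 < ln (real n)" using n by simp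
        have "match_len k x (2^l) \<le> match_len k x n" using l by (intro match_len_mono)
        then have a: "c * (real l * ln 2) - 1 \<le> real (match_len k x n)" using ML2[OF \<open>L0 \<le> l\<close>] by linarith
        have "real n < 2^(l+1)" using l(2) by (metis of_nat_less_iff of_nat_numeral of_nat_power)
        then have "ln (real n) < ln (2^(l+1))" using np by (subst ln_less_cancel_iff) auto
        moreover have "ln ((2::real)^(l+1)) = (real l + 1) * ln 2" by (simp only: ln_realpow) simp
        ultimately have "ln (real n) < (real l + 1) * ln 2" by simp
        then have "c * ln (real n) \<le> c * ((real l + 1) * ln 2)" using c by (intro mult_left_mono) auto
        then have "c * ln (real n) - (c * ln 2 + 1) \<le> real (match_len k x n)" using a by (simp add: algebra_simps)
        then have "(c * ln (real n) - (c * ln 2 + 1)) / ln (real n) \<le> real (match_len k x n) / ln (real n)"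
          using lnp by (intro divide_right_mono) auto
        moreover have "(c * ln (real n) - (c * ln 2 + 1)) / ln (real n) = c - (c * ln 2 + 1) / ln (real n)"
          using lnp by (simp add: diff_divide_distrib)
        ultimately show "c - (c * ln 2 + 1) / ln (real n) \<le> real (match_len k x n) / ln (real n)"
          by simp
      qed
    qed
  qed
qed

end

context symk begin

lemma cyl_in_alg: "length w = m \<Longrightarrow> cyl w \<in> cyl_alg m"
  unfolding cyl_alg_def by (intro CollectI exI[of _ "{w}"]) auto

lemma alpha_mix:
  assumes "alpha_mixing_exp M"
  obtains C \<theta> where "0 \<le> C" "0 < \<theta>" "\<theta> < 1"
    "\<forall>m g. 1 \<le> g \<longrightarrow> mixup m (m+g) ((\<lambda>_. 0) g) ((\<lambda>g. C * \<theta>^g) g)"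
proof -
  obtain C \<theta> :: real where \<theta>: "0 < \<theta>" "\<theta> < 1" and H: "\<forall>g n m A B. A \<in> cyl_alg n \<longrightarrow> B \<in> cyl_alg m \<longrightarrow>
        \<bar>measure M (A \<inter> shift_pre (g + n) B) - measure M A * measure M B\<bar> \<le> C * \<theta> ^ g"
    using assms unfolding alpha_mixing_exp_def by blast
  have "\<bar>measure M (cyl [] \<inter> shift_pre (0 + 0) (cyl [])) - measure M (cyl []) * measure M (cyl [])\<bar> \<le> C * \<theta> ^ 0"
    using H cyl_in_alg[of "[]" 0] by blast
  then have C0: "0 \<le> C" by simp
  have "mixup m (m+g) 0 (C * \<theta>^g)" if "1 \<le> g" for m g
    unfolding mixup_def
  proof (intro allI impI)
    fix w w' :: "'a list" and d assume w: "length w = m" "length w' = m" and d: "m + g \<le> d"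
    have "\<bar>measure M (cyl w \<inter> shift_pre ((d - m) + m) (cyl w')) - measure M (cyl w) * measure M (cyl w')\<bar> \<le> C * \<theta> ^ (d - m)"
      using H cyl_in_alg[OF w(1)] cyl_in_alg[OF w(2)] by blast
    moreover have "(d - m) + m = d" using d by simp
    moreover have "\<theta> ^ (d - m) \<le> \<theta> ^ g" using \<theta> d by (intro power_decreasing) auto
    then have "C * \<theta> ^ (d - m) \<le> C * \<theta> ^ g" using C0 by (intro mult_left_mono) auto
    ultimately show "measure M (cyl w \<inter> shift_pre d (cyl w')) \<le> p w * p w' * (1 + 0) + C * \<theta>^g"
      by (simp add: p_def)
  qed
  then show ?thesis using that[OF C0 \<theta>] by auto
qed

lemma psi_mix:
  assumes "psi_mixing_poly M a" "0 < a"
  shows "\<forall>m g. 1 \<le> g \<longrightarrow> mixup m (m+g) ((\<lambda>g. real g powr (-a)) g) ((\<lambda>_. 0) g)"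
proof (intro allI impI)
  fix m g :: nat assume g: "1 \<le> g"
  show "mixup m (m+g) ((\<lambda>g. real g powr (-a)) g) ((\<lambda>_. 0) g)"
    unfolding mixup_def
  proof (intro allI impI)
    fix w w' :: "'a list" and d assume w: "length w = m" "length w' = m" and d: "m + g \<le> d"
    have dm: "1 \<le> d - m" using d g by simp
    have "\<bar>measure M (cyl w \<inter> shift_pre ((d - m) + m) (cyl w')) - measure M (cyl w) * measure M (cyl w')\<bar>
        \<le> real (d - m) powr (-a) * measure M (cyl w) * measure M (cyl w')"
      using assms(1) cyl_in_alg[OF w(1)] cyl_in_alg[OF w(2)] dm unfolding psi_mixing_poly_def by blast
    moreover have "(d - m) + m = d" using d by simp
    moreover have "real (d - m) powr (-a) \<le> real g powr (-a)" using d g assms(2) by (intro powr_mono2') auto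
    then have "real (d - m) powr (-a) * (p w * p w') \<le> real g powr (-a) * (p w * p w')"
      using p_nonneg by (intro mult_right_mono) auto
    ultimately show "measure M (cyl w \<inter> shift_pre d (cyl w')) \<le> p w * p w' * (1 + real g powr (-a)) + 0"
      by (simp add: p_def algebra_simps)
  qed
qed

lemma lower_mixing:
  assumes mixing: "alpha_mixing_exp M \<or> (\<exists>a>0. psi_mixing_poly M a)"
    and c: "0 < c" and H'': "0 < H''" and HU: "renyi_upper M k < ereal H''" and cH: "c * (real k - 1) * H'' < real k"
  shows "AE x in X. ereal c \<le> liminf (\<lambda>n. ereal (real (match_len k x n) / ln (real n)))"
  using mixing
proof
  assume "alpha_mixing_exp M"
  then obtain C \<theta> where C: "0 \<le> C" "0 < \<theta>" "\<theta> < 1"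
    and mx: "\<forall>m g. 1 \<le> g \<longrightarrow> mixup m (m+g) ((\<lambda>_. 0) g) ((\<lambda>g. C * \<theta>^g) g)" by (rule alpha_mix)
  show ?thesis
  proof (rule lower_c[OF mx _ _ C(1) C(2,3) c H'' HU cH])
    show "\<forall>g\<ge>1. 0 \<le> (0::real) \<and> (0::real) \<le> real g powr (-1) \<and> 0 \<le> C * \<theta>^g \<and> C * \<theta>^g \<le> C * \<theta>^g"
      using C by auto
  qed simp
next
  assume "\<exists>a>0. psi_mixing_poly M a"
  then obtain a where a: "0 < a" "psi_mixing_poly M a" by blast
  show ?thesis
  proof (rule lower_c[OF psi_mix[OF a(2,1)] _ a(1) _ _ _ c H'' HU cH])
    show "\<forall>g\<ge>1. 0 \<le> real g powr (-a) \<and> real g powr (-a) \<le> real g powr (-a) \<and> 0 \<le> (0::real) \<and> (0::real) \<le> 0 * (1/2)^g"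
      by auto
  qed auto
qed

end

context symk begin

lemma renyi_lower_fin': "renyi_lower M k \<le> ereal (real k * ln (real CARD('a)))"
  using renyi_lower_le_upper renyi_upper_fin by (rule order.trans)

lemma upper_main:
  assumes pos: "0 < renyi_lower M k"
  shows "AE x in X. limsup (\<lambda>n. ereal (real (match_len k x n) / ln (real n)))
              \<le> ereal (real k) / (ereal (real k - 1) * renyi_lower M k)"
proof -
  obtain h where h: "renyi_lower M k = ereal h"
    using pos renyi_lower_fin' by (cases "renyi_lower M k") auto
  have h0: "0 < h" using pos h by simp
  have k1: "0 < real k - 1" using k2 by simp
  define b where "b = real k / ((real k - 1) * h)"
  have b0: "0 < b" using h0 k1 k2 by (simp add: b_def)
  have tgt: "ereal (real k) / (ereal (real k - 1) * renyi_lower M k) = ereal b"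
    using h h0 k1 by (simp add: b_def)
  define cr where "cr r = b + inverse (real (Suc r))" for r
  have each: "AE x in X. limsup (\<lambda>n. ereal (real (match_len k x n) / ln (real n))) \<le> ereal (cr r)" for r
  proof -
    have cb: "b < cr r" by (simp add: cr_def)
    have c0: "0 < cr r" using b0 cb by linarith
    define u where "u = real k / ((real k - 1) * cr r)"
    have u0: "0 < u" using k1 c0 k2 by (simp add: u_def)
    have uh: "u < h"
    proof -
      have "(real k - 1) * b < (real k - 1) * cr r" using cb k1 by simp
      then have "real k / ((real k - 1) * cr r) < real k / ((real k - 1) * b)"
        using k1 b0 k2 by (intro divide_strict_left_mono) auto
      also have "real k / ((real k - 1) * b) = h" using h0 k1 k2 by (simp add: b_def field_simps)
      finally show ?thesis by (simp add: u_def)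
    qed
    define H' where "H' = (u + h) / 2"
    have H'0: "0 < H'" using u0 h0 by (simp add: H'_def)
    have H'h: "ereal H' < renyi_lower M k" using uh by (simp add: h H'_def)
    have "real k = cr r * (real k - 1) * u" using k1 c0 by (simp add: u_def field_simps)
    also have "\<dots> < cr r * (real k - 1) * H'" using uh c0 k1 by (simp add: H'_def)
    finally have "real k < cr r * (real k - 1) * H'" .
    then show ?thesis by (rule upper_c[OF H'0 H'h])
  qed
  then have "AE x in X. \<forall>r. limsup (\<lambda>n. ereal (real (match_len k x n) / ln (real n))) \<le> ereal (cr r)"
    by (simp add: AE_all_countable)
  then show ?thesis
  proof (rule AE_mp[OF _ AE_I2[OF impI]])
    fix x assume "x \<in> space X" and H: "\<forall>r. limsup (\<lambda>n. ereal (real (match_len k x n) / ln (real n))) \<le> ereal (cr r)"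
    have lim: "(\<lambda>r. ereal (cr r)) \<longlonglongrightarrow> ereal b"
      unfolding cr_def by (intro tendsto_ereal LIMSEQ_inverse_real_of_nat_add)
    show "limsup (\<lambda>n. ereal (real (match_len k x n) / ln (real n)))
              \<le> ereal (real k) / (ereal (real k - 1) * renyi_lower M k)"
      unfolding tgt by (rule LIMSEQ_le_const[OF lim]) (use H in auto)
  qed
qed

lemma lower_main:
  assumes pos: "0 < renyi_lower M k" and mixing: "alpha_mixing_exp M \<or> (\<exists>a>0. psi_mixing_poly M a)"
  shows "AE x in X. ereal (real k) / (ereal (real k - 1) * renyi_upper M k)
              \<le> liminf (\<lambda>n. ereal (real (match_len k x n) / ln (real n)))"
proof -
  have posu: "0 < renyi_upper M k" using pos renyi_lower_le_upper by (rule less_le_trans)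
  obtain h where h: "renyi_upper M k = ereal h"
    using posu renyi_upper_fin by (cases "renyi_upper M k") auto
  have h0: "0 < h" using posu h by simp
  have k1: "0 < real k - 1" using k2 by simp
  define b where "b = real k / ((real k - 1) * h)"
  have b0: "0 < b" using h0 k1 k2 by (simp add: b_def)
  have tgt: "ereal (real k) / (ereal (real k - 1) * renyi_upper M k) = ereal b"
    using h h0 k1 by (simp add: b_def)
  define cr where "cr r = b * (1 + - inverse (real (Suc r)))" for r
  have each: "AE x in X. ereal (cr r) \<le> liminf (\<lambda>n. ereal (real (match_len k x n) / ln (real n)))"
    if r1: "1 \<le> r" for r
  proof -
    have inv: "0 < inverse (real (Suc r))" "inverse (real (Suc r)) < 1" using r1 by (auto simp: field_simps)
    have cb: "cr r < b" using b0 inv by (simp add: cr_def)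
    have c0: "0 < cr r" using b0 inv by (simp add: cr_def)
    define u where "u = real k / ((real k - 1) * cr r)"
    have uh: "h < u"
    proof -
      have "(real k - 1) * cr r < (real k - 1) * b" using cb k1 by simp
      then have "real k / ((real k - 1) * b) < real k / ((real k - 1) * cr r)"
        using k1 c0 k2 by (intro divide_strict_left_mono) auto
      also have "real k / ((real k - 1) * b) = h" using h0 k1 k2 by (simp add: b_def field_simps)
      finally show ?thesis by (simp add: u_def)
    qed
    define H'' where "H'' = (u + h) / 2"
    have H''0: "0 < H''" using uh h0 by (simp add: H''_def)
    have HU: "renyi_upper M k < ereal H''" using uh by (simp add: h H''_def)
    have "cr r * (real k - 1) * H'' < cr r * (real k - 1) * u" using uh c0 k1 by (simp add: H''_def)
    also have "\<dots> = real k" using k1 c0 by (simp add: u_def field_simps)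
    finally have "cr r * (real k - 1) * H'' < real k" .
    then show ?thesis by (rule lower_mixing[OF mixing c0 H''0 HU])
  qed
  have "AE x in X. \<forall>r. 1 \<le> r \<longrightarrow> ereal (cr r) \<le> liminf (\<lambda>n. ereal (real (match_len k x n) / ln (real n)))"
    using each by (simp add: AE_all_countable)
  then show ?thesis
  proof (rule AE_mp[OF _ AE_I2[OF impI]])
    fix x assume "x \<in> space X" and H: "\<forall>r. 1 \<le> r \<longrightarrow> ereal (cr r) \<le> liminf (\<lambda>n. ereal (real (match_len k x n) / ln (real n)))"
    have lim: "(\<lambda>r. ereal (cr r)) \<longlonglongrightarrow> ereal b"
      unfolding cr_def by (intro tendsto_ereal LIMSEQ_inverse_real_of_nat_add_minus_mult)
    show "ereal (real k) / (ereal (real k - 1) * renyi_upper M k)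
              \<le> liminf (\<lambda>n. ereal (real (match_len k x n) / ln (real n)))"
      unfolding tgt by (rule LIMSEQ_le_const2[OF lim]) (use H in auto)
  qed
qed

end

theorem mainTheorem7:
  fixes M :: "(nat \<Rightarrow> 'a::finite) measure" and k :: nat
  assumes "symbolic_system M" and "k \<ge> 2" and "renyi_lower M k > 0"
  shows "(AE x in PiM {..<k} (\<lambda>_. M).
            limsup (\<lambda>n. ereal (real (match_len k x n) / ln (real n)))
              \<le> ereal (real k) / (ereal (real k - 1) * renyi_lower M k))
       \<and> ((alpha_mixing_exp M \<or> (\<exists>a>0. psi_mixing_poly M a)) \<longrightarrow>
           (AE x in PiM {..<k} (\<lambda>_. M).
              liminf (\<lambda>n. ereal (real (match_len k x n) / ln (real n)))
                \<ge> ereal (real k) / (ereal (real k - 1) * renyi_upper M k))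
         \<and> (renyi_lower M k = renyi_upper M k \<longrightarrow>
             (AE x in PiM {..<k} (\<lambda>_. M).
                ((\<lambda>n. ereal (real (match_len k x n) / ln (real n)))
                  \<longlongrightarrow> ereal (real k) / (ereal (real k - 1) * renyi_lower M k)) sequentially)))"
proof -
  interpret S: symk M k by unfold_locales (use assms in auto)
  have U: "AE x in PiM {..<k} (\<lambda>_. M).
            limsup (\<lambda>n. ereal (real (match_len k x n) / ln (real n)))
              \<le> ereal (real k) / (ereal (real k - 1) * renyi_lower M k)"
    by (rule S.upper_main[OF assms(3)])
  show ?thesis
  proof (intro conjI impI)
    show "AE x in PiM {..<k} (\<lambda>_. M).
            limsup (\<lambda>n. ereal (real (match_len k x n) / ln (real n)))
              \<le> ereal (real k) / (ereal (real k - 1) * renyi_lower M k)" by (rule U)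
  next
    assume mixing: "alpha_mixing_exp M \<or> (\<exists>a>0. psi_mixing_poly M a)"
    have Lo: "AE x in PiM {..<k} (\<lambda>_. M).
              liminf (\<lambda>n. ereal (real (match_len k x n) / ln (real n)))
                \<ge> ereal (real k) / (ereal (real k - 1) * renyi_upper M k)"
      by (rule S.lower_main[OF assms(3) mixing])
    then show "AE x in PiM {..<k} (\<lambda>_. M).
              liminf (\<lambda>n. ereal (real (match_len k x n) / ln (real n)))
                \<ge> ereal (real k) / (ereal (real k - 1) * renyi_upper M k)" .
    assume eq: "renyi_lower M k = renyi_upper M k"
    show "AE x in PiM {..<k} (\<lambda>_. M).
                ((\<lambda>n. ereal (real (match_len k x n) / ln (real n)))
                  \<longlongrightarrow> ereal (real k) / (ereal (real k - 1) * renyi_lower M k)) sequentially"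
      using U Lo
    proof eventually_elim
      case (elim x)
      define f where "f = (\<lambda>n. ereal (real (match_len k x n) / ln (real n)))"
      define B where "B = ereal (real k) / (ereal (real k - 1) * renyi_lower M k)"
      have a: "limsup f \<le> B" using elim by (simp add: f_def B_def)
      have b: "B \<le> liminf f" using elim eq by (simp add: f_def B_def)
      have c: "liminf f \<le> limsup f" by (rule Liminf_le_Limsup) simp
      have "liminf f = B" using a b c by (rule_tac antisym) auto
      moreover have "limsup f = B" using a b c by (rule_tac antisym) auto
      ultimately have "(f \<longlongrightarrow> B) sequentially" by (intro Liminf_eq_Limsup) auto
      then show ?case by (simp add: f_def B_def)
    qed
  qed
qed


end
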